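(* Let $A\cup\{\varphi\}$ be a finite set of formulas of $\mathcal{L}$. If $A\vdash_{\mathsf{IntCK}}\varphi$, then the nested sequent $A^\bullet,\varphi^\circ$ (where $A^\bullet=\{\gamma^\bullet\mid\gamma\in A\}$) is derivable in $\mathsf{N.IntCK}$.
   Context: Language $\mathcal{L}$: formulas $\varphi ::= p \mid \bot \mid \varphi\wedge\varphi \mid \varphi\vee\varphi \mid \varphi\to\varphi \mid \varphi \mathrel{\Box\!\!\to} \varphi \mid \varphi \mathrel{\Diamond\!\!\to}\varphi$; $\neg\varphi:=\varphi\to\bot$, $\top:=\neg\bot$, $\varphi\leftrightarrow\psi:=(\varphi\to\psi)\wedge(\psi\to\varphi)$. Hilbert system $\mathsf{IntCK}$: any axiomatisation of intuitionistic propositional logic in $\mathcal{L}$ with modus ponens, plus rules RA$_\Box$: from $\varphi\leftrightarrow\rho$ infer $(\varphi\mathrel{\Box\!\!\to}\psi)\leftrightarrow(\rho\mathrel{\Box\!\!\to}\psi)$; RC$_\Box$: from $\psi\leftrightarrow\chi$ infer $(\varphi\mathrel{\Box\!\!\to}\psi)\leftrightarrow(\varphi\mathrel{\Box\!\!\to}\chi)$; RA$_\Diamond$, RC$_\Diamond$: the same with $\mathrel{\Diamond\!\!\to}$; axioms CM$_\Box$: $(\varphi\mathrel{\Box\!\!\to}\psi\wedge\chi)\to(\varphi\mathrel{\Box\!\!\to}\psi)\wedge(\varphi\mathrel{\Box\!\!\to}\chi)$; CC$_\Box$: $(\varphi\mathrel{\Box\!\!\to}\psi)\wedge(\varphi\mathrel{\Box\!\!\to}\chi)\to(\varphi\mathrel{\Box\!\!\to}\psi\wedge\chi)$;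 CN$_\Box$: $\varphi\mathrel{\Box\!\!\to}\top$; CM$_\Diamond$: $(\varphi\mathrel{\Diamond\!\!\to}\psi)\vee(\varphi\mathrel{\Diamond\!\!\to}\chi)\to(\varphi\mathrel{\Diamond\!\!\to}\psi\vee\chi)$; CC$_\Diamond$: $(\varphi\mathrel{\Diamond\!\!\to}\psi\vee\chi)\to(\varphi\mathrel{\Diamond\!\!\to}\psi)\vee(\varphi\mathrel{\Diamond\!\!\to}\chi)$; CN$_\Diamond$: $\neg(\varphi\mathrel{\Diamond\!\!\to}\bot)$; CW: $(\varphi\mathrel{\Diamond\!\!\to}\psi)\wedge(\varphi\mathrel{\Box\!\!\to}\chi)\to(\varphi\mathrel{\Diamond\!\!\to}\psi\wedge\chi)$; CFS: $((\varphi\mathrel{\Diamond\!\!\to}\psi)\to(\varphi\mathrel{\Box\!\!\to}\chi))\to(\varphi\mathrel{\Box\!\!\to}(\psi\to\chi))$. $A\vdash_{\mathsf{IntCK}}\varphi$ means there are $\psi_1,\dots,\psi_n\in A$ with $\psi_1\wedge\dots\wedge\psi_n\to\varphi$ derivable in $\mathsf{IntCK}$. Nested sequents: each formula $\varphi$ gets an input polarity $\varphi^\bullet$ or output polarity $\varphi^\circ$. Input sequents $\Lambda ::= \emptyset \mid \Lambda,\varphi^\bullet \mid \Lambda,[\psi:\Lambda]$ and nested sequents $\Gamma ::= \Lambda,\varphi^\circ \mid \Lambda,[\psi:\Gamma]$, where the index $\psi$ of a component $[\psi:\cdot]$ is an unpolarised formula (commas associative and commutative). A context $\Gamma\{\ \}$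 is a sequent with one hole $\{\ \}$ (possibly inside nested components); rules are applied only when premisses and conclusion are nested sequents. $\Gamma^{\downarrow}\{\ \}$ denotes $\Gamma\{\ \}$ with its output formula removed. Rules of $\mathsf{N.IntCK}$ (premisses / conclusion): init: $\Gamma\{p^\bullet,p^\circ\}$ ($p$ atom, no premiss); $\bot^\bullet$: $\Gamma\{\bot^\bullet\}$ (no premiss); $\wedge^\bullet$: $\Gamma\{\varphi^\bullet,\psi^\bullet\}$ / $\Gamma\{(\varphi\wedge\psi)^\bullet\}$; $\wedge^\circ$: $\Gamma\{\varphi^\circ\}$, $\Gamma\{\psi^\circ\}$ / $\Gamma\{(\varphi\wedge\psi)^\circ\}$; $\vee^\bullet$: $\Gamma\{\varphi^\bullet\}$, $\Gamma\{\psi^\bullet\}$ / $\Gamma\{(\varphi\vee\psi)^\bullet\}$; $\vee^\circ$: $\Gamma\{\varphi^\circ\}$ / $\Gamma\{(\varphi\vee\psi)^\circ\}$ and $\Gamma\{\psi^\circ\}$ / $\Gamma\{(\varphi\vee\psi)^\circ\}$; $\to^\bullet$: $\Gamma^\downarrow\{(\varphi\to\psi)^\bullet,\varphi^\circ\}$, $\Gamma\{\psi^\bullet\}$ / $\Gamma\{(\varphi\to\psi)^\bullet\}$; $\to^\circ$: $\Gamma\{\varphi^\bullet,\psi^\circ\}$ / $\Gamma\{(\varphi\to\psi)^\circ\}$; $\Box^\bullet$: $\varphi^\bullet,\eta^\circ$ and $\eta^\bullet,\varphi^\circ$ and $\Gamma\{(\varphi\mathrel{\Box\!\!\to}\psi)^\bullet,[\eta:\psi^\bullet,\Delta]\}$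 / $\Gamma\{(\varphi\mathrel{\Box\!\!\to}\psi)^\bullet,[\eta:\Delta]\}$; $\Box^\circ$: $\Gamma\{[\varphi:\psi^\circ]\}$ / $\Gamma\{(\varphi\mathrel{\Box\!\!\to}\psi)^\circ\}$; $\Diamond^\bullet$: $\Gamma\{[\varphi:\psi^\bullet]\}$ / $\Gamma\{(\varphi\mathrel{\Diamond\!\!\to}\psi)^\bullet\}$; $\Diamond^\circ$: $\varphi^\bullet,\eta^\circ$ and $\eta^\bullet,\varphi^\circ$ and $\Gamma\{[\eta:\psi^\circ,\Delta]\}$ / $\Gamma\{(\varphi\mathrel{\Diamond\!\!\to}\psi)^\circ,[\eta:\Delta]\}$. A derivation is a finite tree of rule instances whose leaves are instances of init or $\bot^\bullet$. *)

theory Defs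
  imports "HOL-Library.Multiset"
begin

datatype 'a fm =
    Atom 'a
  | Bot
  | And "'a fm" "'a fm"
  | Or "'a fm" "'a fm"
  | Imp "'a fm" "'a fm"
  | BoxArr "'a fm" "'a fm"
  | DiaArr "'a fm" "'a fm"

definition Neg :: "'a fm \<Rightarrow> 'a fm" where "Neg p = Imp p Bot"
definition Top :: "'a fm" where "Top = Neg Bot"
definition Iff :: "'a fm \<Rightarrow> 'a fm \<Rightarrow> 'a fm" where "Iff p q = And (Imp p q) (Imp q p)"

inductive hprov :: "'a fm \<Rightarrow> bool" where
  K:   "hprov (Imp p (Imp q p))"
| S:   "hprov (Imp (Imp p (Imp q r)) (Imp (Imp p q) (Imp p r)))"
| AndE1: "hprov (Imp (And p q) p)"
| AndE2: "hprov (Imp (And p q) q)"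
| AndI: "hprov (Imp p (Imp q (And p q)))"
| OrI1: "hprov (Imp p (Or p q))"
| OrI2: "hprov (Imp q (Or p q))"
| OrE:  "hprov (Imp (Imp p r) (Imp (Imp q r) (Imp (Or p q) r)))"
| BotE: "hprov (Imp Bot p)"
| MP:   "hprov (Imp p q) \<Longrightarrow> hprov p \<Longrightarrow> hprov q"
| RA_Box: "hprov (Iff p r) \<Longrightarrow> hprov (Iff (BoxArr p q) (BoxArr r q))"
| RC_Box: "hprov (Iff q c) \<Longrightarrow> hprov (Iff (BoxArr p q) (BoxArr p c))"
| RA_Dia: "hprov (Iff p r) \<Longrightarrow> hprov (Iff (DiaArr p q) (DiaArr r q))"
| RC_Dia: "hprov (Iff q c) \<Longrightarrow> hprov (Iff (DiaArr p q) (DiaArr p c))"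
| CM_Box: "hprov (Imp (BoxArr p (And q c)) (And (BoxArr p q) (BoxArr p c)))"
| CC_Box: "hprov (Imp (And (BoxArr p q) (BoxArr p c)) (BoxArr p (And q c)))"
| CN_Box: "hprov (BoxArr p Top)"
| CM_Dia: "hprov (Imp (Or (DiaArr p q) (DiaArr p c)) (DiaArr p (Or q c)))"
| CC_Dia: "hprov (Imp (DiaArr p (Or q c)) (Or (DiaArr p q) (DiaArr p c)))"
| CN_Dia: "hprov (Neg (DiaArr p Bot))"
| CW: "hprov (Imp (And (DiaArr p q) (BoxArr p c)) (DiaArr p (And q c)))"
| CFS: "hprov (Imp (Imp (DiaArr p q) (BoxArr p c)) (BoxArr p (Imp q c)))"

fun conjs :: "'a fm list \<Rightarrow> 'a fm" where
  "conjs [] = Top"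
| "conjs [x] = x"
| "conjs (x # xs) = And x (conjs xs)"

definition derives :: "'a fm set \<Rightarrow> 'a fm \<Rightarrow> bool" where
  "derives A p \<longleftrightarrow> (\<exists>xs. set xs \<subseteq> A \<and> hprov (Imp (conjs xs) p))"

text \<open>A (possibly ill-formed) sequent: multiset of input formulas, multiset of
output formulas, multiset of components [index : sequent].  Commas are
associative and commutative, so multisets are used.\<close>

datatype 'a seq = Seq "'a fm multiset" "'a fm multiset" "('a fm \<times> 'a seq) multiset"

primrec outs :: "'a seq \<Rightarrow> nat" where
  "outs (Seq X Y Z) = size Y + sum_mset (image_mset snd (image_mset (map_prod id outs) Z))"

text \<open>Nested sequents are exactly those with exactly one output formula
occurring somewhere in the tree (input sequents have none).\<close>
definition nested :: "'a seq \<Rightarrow> bool" where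
  "nested S \<longleftrightarrow> outs S = 1"

primrec strip :: "'a seq \<Rightarrow> 'a seq" where
  "strip (Seq X Y Z) = Seq X {#} (image_mset (map_prod id strip) Z)"

text \<open>The material sitting next to the hole at its level
is part of the filling (see the rules below, which always add arbitrary X Y Z).\<close>
datatype 'a ctx = CHole | CNode "'a fm multiset" "'a fm multiset" "('a fm \<times> 'a seq) multiset" "'a fm" "'a ctx"

primrec fill :: "'a ctx \<Rightarrow> 'a seq \<Rightarrow> 'a seq" where
  "fill CHole D = D"
| "fill (CNode X Y Z x c) D = Seq X Y (Z + {#(x, fill c D)#})"

primrec cstrip :: "'a ctx \<Rightarrow> 'a ctx" where
  "cstrip CHole = CHole"
| "cstrip (CNode X Y Z x c) = CNode X {#} (image_mset (map_prod id strip) Z) x (cstrip c)"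

definition io :: "'a fm \<Rightarrow> 'a fm \<Rightarrow> 'a seq" where
  "io a b = Seq {#a#} {#b#} {#}"

inductive nderiv :: "'a seq \<Rightarrow> bool" where
  init: "nested (fill G (Seq (X + {#Atom p#}) (Y + {#Atom p#}) Z))
     \<Longrightarrow> nderiv (fill G (Seq (X + {#Atom p#}) (Y + {#Atom p#}) Z))"
| botL: "nested (fill G (Seq (X + {#Bot#}) Y Z))
     \<Longrightarrow> nderiv (fill G (Seq (X + {#Bot#}) Y Z))"
| andL: "nested (fill G (Seq (X + {#And a b#}) Y Z))
     \<Longrightarrow> nested (fill G (Seq (X + {#a, b#}) Y Z))
     \<Longrightarrow> nderiv (fill G (Seq (X + {#a, b#}) Y Z))
     \<Longrightarrow> nderiv (fill G (Seq (X + {#And a b#}) Y Z))"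
| andR: "nested (fill G (Seq X (Y + {#And a b#}) Z))
     \<Longrightarrow> nested (fill G (Seq X (Y + {#a#}) Z))
     \<Longrightarrow> nested (fill G (Seq X (Y + {#b#}) Z))
     \<Longrightarrow> nderiv (fill G (Seq X (Y + {#a#}) Z))
     \<Longrightarrow> nderiv (fill G (Seq X (Y + {#b#}) Z))
     \<Longrightarrow> nderiv (fill G (Seq X (Y + {#And a b#}) Z))"
| orL: "nested (fill G (Seq (X + {#Or a b#}) Y Z))
     \<Longrightarrow> nested (fill G (Seq (X + {#a#}) Y Z))
     \<Longrightarrow> nested (fill G (Seq (X + {#b#}) Y Z))
     \<Longrightarrow> nderiv (fill G (Seq (X + {#a#}) Y Z))
     \<Longrightarrow> nderiv (fill G (Seq (X + {#b#}) Y Z))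
     \<Longrightarrow> nderiv (fill G (Seq (X + {#Or a b#}) Y Z))"
| orR1: "nested (fill G (Seq X (Y + {#Or a b#}) Z))
     \<Longrightarrow> nested (fill G (Seq X (Y + {#a#}) Z))
     \<Longrightarrow> nderiv (fill G (Seq X (Y + {#a#}) Z))
     \<Longrightarrow> nderiv (fill G (Seq X (Y + {#Or a b#}) Z))"
| orR2: "nested (fill G (Seq X (Y + {#Or a b#}) Z))
     \<Longrightarrow> nested (fill G (Seq X (Y + {#b#}) Z))
     \<Longrightarrow> nderiv (fill G (Seq X (Y + {#b#}) Z))
     \<Longrightarrow> nderiv (fill G (Seq X (Y + {#Or a b#}) Z))"
| impL: "nested (fill G (Seq (X + {#Imp a b#}) Y Z))
     \<Longrightarrow> nested (fill (cstrip G) (Seq (X + {#Imp a b#}) {#a#} (image_mset (map_prod id strip) Z)))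
     \<Longrightarrow> nested (fill G (Seq (X + {#b#}) Y Z))
     \<Longrightarrow> nderiv (fill (cstrip G) (Seq (X + {#Imp a b#}) {#a#} (image_mset (map_prod id strip) Z)))
     \<Longrightarrow> nderiv (fill G (Seq (X + {#b#}) Y Z))
     \<Longrightarrow> nderiv (fill G (Seq (X + {#Imp a b#}) Y Z))"
| impR: "nested (fill G (Seq X (Y + {#Imp a b#}) Z))
     \<Longrightarrow> nested (fill G (Seq (X + {#a#}) (Y + {#b#}) Z))
     \<Longrightarrow> nderiv (fill G (Seq (X + {#a#}) (Y + {#b#}) Z))
     \<Longrightarrow> nderiv (fill G (Seq X (Y + {#Imp a b#}) Z))"
| boxL: "nested (fill G (Seq (X + {#BoxArr a b#}) Y (Z + {#(e, Seq X' Y' Z')#})))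
     \<Longrightarrow> nested (fill G (Seq (X + {#BoxArr a b#}) Y (Z + {#(e, Seq (X' + {#b#}) Y' Z')#})))
     \<Longrightarrow> nderiv (io a e) \<Longrightarrow> nderiv (io e a)
     \<Longrightarrow> nderiv (fill G (Seq (X + {#BoxArr a b#}) Y (Z + {#(e, Seq (X' + {#b#}) Y' Z')#})))
     \<Longrightarrow> nderiv (fill G (Seq (X + {#BoxArr a b#}) Y (Z + {#(e, Seq X' Y' Z')#})))"
| boxR: "nested (fill G (Seq X (Y + {#BoxArr a b#}) Z))
     \<Longrightarrow> nested (fill G (Seq X Y (Z + {#(a, Seq {#} {#b#} {#})#})))
     \<Longrightarrow> nderiv (fill G (Seq X Y (Z + {#(a, Seq {#} {#b#} {#})#})))
     \<Longrightarrow> nderiv (fill G (Seq X (Y + {#BoxArr a b#}) Z))"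
| diaL: "nested (fill G (Seq (X + {#DiaArr a b#}) Y Z))
     \<Longrightarrow> nested (fill G (Seq X Y (Z + {#(a, Seq {#b#} {#} {#})#})))
     \<Longrightarrow> nderiv (fill G (Seq X Y (Z + {#(a, Seq {#b#} {#} {#})#})))
     \<Longrightarrow> nderiv (fill G (Seq (X + {#DiaArr a b#}) Y Z))"
| diaR: "nested (fill G (Seq X (Y + {#DiaArr a b#}) (Z + {#(e, Seq X' Y' Z')#})))
     \<Longrightarrow> nested (fill G (Seq X Y (Z + {#(e, Seq X' (Y' + {#b#}) Z')#})))
     \<Longrightarrow> nderiv (io a e) \<Longrightarrow> nderiv (io e a)
     \<Longrightarrow> nderiv (fill G (Seq X Y (Z + {#(e, Seq X' (Y' + {#b#}) Z')#})))
     \<Longrightarrow> nderiv (fill G (Seq X (Y + {#DiaArr a b#}) (Z + {#(e, Seq X' Y' Z')#})))"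

end

theory Submission
  imports Defs
begin

type_synonym 'a edges = "(nat \<times> 'a fm \<times> nat) multiset"
type_synonym 'a ins = "(nat \<times> 'a fm) multiset"

definition elabs :: "'a edges \<Rightarrow> nat set" where
  "elabs E = fst ` set_mset E \<union> (snd \<circ> snd) ` set_mset E"
definition ilabs :: "'a ins \<Rightarrow> nat set" where
  "ilabs I = fst ` set_mset I"
definition labs :: "'a edges \<Rightarrow> 'a ins \<Rightarrow> nat \<times> 'a fm \<Rightarrow> nat set" where
  "labs E I u = elabs E \<union> ilabs I \<union> {fst u}"

lemma finite_elabs[simp]: "finite (elabs E)" by (simp add: elabs_def)
lemma finite_ilabs[simp]: "finite (ilabs I)" by (simp add: ilabs_def)
lemma finite_labs[simp]: "finite (labs E I u)" by (simp add: labs_def)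

lemma elabs_add[simp]: "elabs (add_mset (x,e,y) E) = insert x (insert y (elabs E))"
  by (auto simp: elabs_def)
lemma elabs_empty[simp]: "elabs {#} = {}" by (simp add: elabs_def)
lemma elabs_union[simp]: "elabs (E + E') = elabs E \<union> elabs E'" by (auto simp: elabs_def)
lemma ilabs_add[simp]: "ilabs (add_mset (x,f) I) = insert x (ilabs I)"
  by (auto simp: ilabs_def)
lemma ilabs_empty[simp]: "ilabs {#} = {}" by (simp add: ilabs_def)
lemma ilabs_union[simp]: "ilabs (I + I') = ilabs I \<union> ilabs I'" by (auto simp: ilabs_def)
lemma elabs_mem: "(x,e,y) \<in># E \<Longrightarrow> x \<in> elabs E \<and> y \<in> elabs E"
  by (force simp: elabs_def)
lemma ilabs_mem: "(x,f) \<in># I \<Longrightarrow> x \<in> ilabs I"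
  by (force simp: ilabs_def)

lemma ex_fresh: "finite (S::nat set) \<Longrightarrow> \<exists>y. y \<notin> S"
  using infinite_UNIV_nat by (metis ex_new_if_finite)

inductive L :: "'a edges \<Rightarrow> 'a ins \<Rightarrow> nat \<times> 'a fm \<Rightarrow> bool" where
  Init: "L E (add_mset (x, Atom p) I) (x, Atom p)"
| BotL: "L E (add_mset (x, Bot) I) u"
| AndL: "L E (add_mset (x,a) (add_mset (x,b) I)) u \<Longrightarrow> L E (add_mset (x, And a b) I) u"
| AndR: "L E I (x,a) \<Longrightarrow> L E I (x,b) \<Longrightarrow> L E I (x, And a b)"
| OrL: "L E (add_mset (x,a) I) u \<Longrightarrow> L E (add_mset (x,b) I) u \<Longrightarrow> L E (add_mset (x, Or a b) I) u"
| OrR1: "L E I (x,a) \<Longrightarrow> L E I (x, Or a b)"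
| OrR2: "L E I (x,b) \<Longrightarrow> L E I (x, Or a b)"
| ImpL: "L E (add_mset (x, Imp a b) I) (x,a) \<Longrightarrow> L E (add_mset (x,b) I) u \<Longrightarrow> L E (add_mset (x, Imp a b) I) u"
| ImpR: "L E (add_mset (x,a) I) (x,b) \<Longrightarrow> L E I (x, Imp a b)"
| BoxL: "(x,e,z) \<in># E \<Longrightarrow> L {#} {#(0,a)#} (0,e) \<Longrightarrow> L {#} {#(0,e)#} (0,a)
   \<Longrightarrow> L E (add_mset (z,b) (add_mset (x, BoxArr a b) I)) u \<Longrightarrow> L E (add_mset (x, BoxArr a b) I) u"
| BoxR: "finite F \<Longrightarrow> (\<forall>y. y \<notin> F \<longrightarrow> L (add_mset (x,a,y) E) I (y,b)) \<Longrightarrow> L E I (x, BoxArr a b)"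
| DiaL: "finite F \<Longrightarrow> (\<forall>y. y \<notin> F \<longrightarrow> L (add_mset (x,a,y) E) (add_mset (y,b) I) u)
   \<Longrightarrow> L E (add_mset (x, DiaArr a b) I) u"
| DiaR: "(x,e,z) \<in># E \<Longrightarrow> L {#} {#(0,a)#} (0,e) \<Longrightarrow> L {#} {#(0,e)#} (0,a)
   \<Longrightarrow> L E I (z,b) \<Longrightarrow> L E I (x, DiaArr a b)"

abbreviation Lio :: "'a fm \<Rightarrow> 'a fm \<Rightarrow> bool" where
  "Lio a e \<equiv> L {#} {#(0,a)#} (0,e)"

lemma weak: "L E I u \<Longrightarrow> L (E + E') (I + I') u"
proof (induction arbitrary: E' I' rule: L.induct)
  case (BoxR F x a E I b)
  then show ?case by (intro L.BoxR[of F]) auto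
next
  case (DiaL F x a E b I u)
  then show ?case by (auto intro!: L.DiaL[of F])
qed (auto intro: L.intros)

lemma weakI: "L E I u \<Longrightarrow> L E (I + I') u"
  using weak[of E I u "{#}" I'] by simp
lemma weakE: "L E I u \<Longrightarrow> L (E + E') I u"
  using weak[of E I u E' "{#}"] by simp
lemma weak1: "L E I u \<Longrightarrow> L E (add_mset v I) u"
  using weakI[of E I u "{#v#}"] by simp
lemma weakE1: "L E I u \<Longrightarrow> L (add_mset v E) I u"
  using weakE[of E I u "{#v#}"] by simp

definition renE :: "(nat \<Rightarrow> nat) \<Rightarrow> 'a edges \<Rightarrow> 'a edges" where
  "renE \<sigma> E = image_mset (\<lambda>(x,e,y). (\<sigma> x, e, \<sigma> y)) E"
definition renI :: "(nat \<Rightarrow> nat) \<Rightarrow> 'a ins \<Rightarrow> 'a ins" where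
  "renI \<sigma> I = image_mset (\<lambda>(x,f). (\<sigma> x, f)) I"

lemma renE_add[simp]: "renE \<sigma> (add_mset (x,e,y) E) = add_mset (\<sigma> x, e, \<sigma> y) (renE \<sigma> E)"
  by (simp add: renE_def)
lemma renI_add[simp]: "renI \<sigma> (add_mset (x,f) I) = add_mset (\<sigma> x, f) (renI \<sigma> I)"
  by (simp add: renI_def)
lemma renE_empty[simp]: "renE \<sigma> {#} = {#}" by (simp add: renE_def)
lemma renI_empty[simp]: "renI \<sigma> {#} = {#}" by (simp add: renI_def)
lemma renE_mem: "(x,e,z) \<in># E \<Longrightarrow> (\<sigma> x, e, \<sigma> z) \<in># renE \<sigma> E"
  by (force simp: renE_def)

lemma renE_cong: "(\<And>z. z \<in> elabs E \<Longrightarrow> \<sigma> z = \<tau> z) \<Longrightarrow> renE \<sigma> E = renE \<tau> E"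
  unfolding renE_def elabs_def by (rule image_mset_cong) force
lemma renI_cong: "(\<And>z. z \<in> ilabs I \<Longrightarrow> \<sigma> z = \<tau> z) \<Longrightarrow> renI \<sigma> I = renI \<tau> I"
  unfolding renI_def ilabs_def by (rule image_mset_cong) force
lemma renE_id: "(\<And>z. z \<in> elabs E \<Longrightarrow> \<sigma> z = z) \<Longrightarrow> renE \<sigma> E = E"
  unfolding renE_def elabs_def by (rule trans[OF image_mset_cong image_mset_id]) force
lemma renI_id: "(\<And>z. z \<in> ilabs I \<Longrightarrow> \<sigma> z = z) \<Longrightarrow> renI \<sigma> I = I"
  unfolding renI_def ilabs_def by (rule trans[OF image_mset_cong image_mset_id]) force

lemma ren: "L E I u \<Longrightarrow> L (renE \<sigma> E) (renI \<sigma> I) (\<sigma> (fst u), snd u)"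
proof (induction arbitrary: \<sigma> rule: L.induct)
  case (BoxL x e z E a b I u)
  then show ?case by (auto intro!: L.BoxL renE_mem)
next
  case (DiaR x e z E a b I)
  then show ?case by (auto intro!: L.DiaR renE_mem)
next
  case (BoxR F x a E I b)
  show ?case
  proof (simp only: fst_conv snd_conv, rule L.BoxR[of "{}"], safe)
    fix y'
    obtain y where y: "y \<notin> F \<union> elabs E \<union> ilabs I \<union> {x}"
      using ex_fresh[of "F \<union> elabs E \<union> ilabs I \<union> {x}"] BoxR(1) by auto
    from BoxR(2) y have "\<forall>\<sigma>. L (renE \<sigma> (add_mset (x,a,y) E)) (renI \<sigma> I) (\<sigma> (fst (y,b)), snd (y,b))"
      by blast
    then have "L (renE (\<sigma>(y:=y')) (add_mset (x,a,y) E)) (renI (\<sigma>(y:=y')) I) ((\<sigma>(y:=y')) y, b)"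
      by (metis fst_conv snd_conv)
    moreover have "renE (\<sigma>(y:=y')) E = renE \<sigma> E" by (rule renE_cong) (use y in auto)
    moreover have "renI (\<sigma>(y:=y')) I = renI \<sigma> I" by (rule renI_cong) (use y in auto)
    ultimately show "L (add_mset (\<sigma> x, a, y') (renE \<sigma> E)) (renI \<sigma> I) (y', b)"
      using y by auto
  qed
next
  case (DiaL F x a E b I u)
  show ?case
  proof (simp, rule L.DiaL[of "{}"], safe)
    fix y'
    obtain y where y: "y \<notin> F \<union> elabs E \<union> ilabs I \<union> {x, fst u}"
      using ex_fresh[of "F \<union> elabs E \<union> ilabs I \<union> {x, fst u}"] DiaL(1) by auto
    from DiaL(2) y have "\<forall>\<sigma>. L (renE \<sigma> (add_mset (x,a,y) E)) (renI \<sigma> (add_mset (y,b) I)) (\<sigma> (fst u), snd u)"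
      by blast
    then have "L (renE (\<sigma>(y:=y')) (add_mset (x,a,y) E)) (renI (\<sigma>(y:=y')) (add_mset (y,b) I)) ((\<sigma>(y:=y')) (fst u), snd u)"
      by blast
    moreover have "renE (\<sigma>(y:=y')) E = renE \<sigma> E" by (rule renE_cong) (use y in auto)
    moreover have "renI (\<sigma>(y:=y')) I = renI \<sigma> I" by (rule renI_cong) (use y in auto)
    ultimately show "L (add_mset (\<sigma> x, a, y') (renE \<sigma> E)) (add_mset (y', b) (renI \<sigma> I)) (\<sigma> (fst u), snd u)"
      using y by auto
  qed
qed (auto intro: L.intros)

lemma ren1:
  assumes "L E I u" "y \<notin> elabs E" "y \<notin> ilabs I" "y \<noteq> fst u"
  shows "L (renE (id(y:=z)) E) (renI (id(y:=z)) I) u"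
  using ren[OF assms(1), of "id(y:=z)"] assms(4) by (cases u) auto

lemma ren_fresh_edge:
  assumes "L (add_mset (x,a,y) E) I u" "y \<notin> elabs E" "y \<notin> ilabs I" "y \<noteq> x" "y \<noteq> fst u"
  shows "L (add_mset (x,a,z) E) I u"
proof -
  have "L (renE (id(y:=z)) (add_mset (x,a,y) E)) (renI (id(y:=z)) I) u"
    using ren[OF assms(1), of "id(y:=z)"] assms by (cases u) auto
  moreover have "renE (id(y:=z)) E = E" by (rule renE_id) (use assms in auto)
  moreover have "renI (id(y:=z)) I = I" by (rule renI_id) (use assms in auto)
  ultimately show ?thesis using assms by simp
qed

lemma ren_fresh_edge_in:
  assumes "L (add_mset (x,a,y) E) (add_mset (y,b) I) u" "y \<notin> elabs E" "y \<notin> ilabs I" "y \<noteq> x" "y \<noteq> fst u"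
  shows "L (add_mset (x,a,z) E) (add_mset (z,b) I) u"
proof -
  have "L (renE (id(y:=z)) (add_mset (x,a,y) E)) (renI (id(y:=z)) (add_mset (y,b) I)) u"
    using ren[OF assms(1), of "id(y:=z)"] assms by (cases u) auto
  moreover have "renE (id(y:=z)) E = E" by (rule renE_id) (use assms in auto)
  moreover have "renI (id(y:=z)) I = I" by (rule renI_id) (use assms in auto)
  ultimately show ?thesis using assms by simp
qed

lemma ren_fresh_edge_out:
  assumes "L (add_mset (x,a,y) E) I (y,b)" "y \<notin> elabs E" "y \<notin> ilabs I" "y \<noteq> x"
  shows "L (add_mset (x,a,z) E) I (z,b)"
proof -
  have "L (renE (id(y:=z)) (add_mset (x,a,y) E)) (renI (id(y:=z)) I) (z,b)"
    using ren[OF assms(1), of "id(y:=z)"] assms by auto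
  moreover have "renE (id(y:=z)) E = E" by (rule renE_id) (use assms in auto)
  moreover have "renI (id(y:=z)) I = I" by (rule renI_id) (use assms in auto)
  ultimately show ?thesis using assms by simp
qed

lemma ident: "L E (add_mset (x,\<phi>) I) (x,\<phi>)"
proof (induction \<phi> arbitrary: E I x)
  case (Atom p) then show ?case by (rule L.Init)
next
  case Bot then show ?case by (rule L.BotL)
next
  case (And a b)
  show ?case
    by (rule L.AndL, rule L.AndR, rule And.IH(1), subst add_mset_commute, rule And.IH(2))
next
  case (Or a b)
  show ?case by (rule L.OrL; (rule L.OrR1, use Or in auto)?; (rule L.OrR2, use Or in auto)?)
next
  case (Imp a b)
  show ?case
  proof (rule L.ImpR, subst add_mset_commute, rule L.ImpL)
    show "L E (add_mset (x, Imp a b) (add_mset (x, a) I)) (x, a)"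
      by (subst add_mset_commute, rule Imp.IH(1))
    show "L E (add_mset (x, b) (add_mset (x, a) I)) (x, b)" by (rule Imp.IH(2))
  qed
next
  case (BoxArr a b)
  show ?case
  proof (rule L.BoxR[of "{}"], safe)
    fix y
    show "L (add_mset (x, a, y) E) (add_mset (x, BoxArr a b) I) (y, b)"
      by (rule L.BoxL[of x a y]) (use BoxArr in auto)
  qed
next
  case (DiaArr a b)
  show ?case
  proof (rule L.DiaL[of "{}"], safe)
    fix y
    show "L (add_mset (x, a, y) E) (add_mset (y, b) I) (x, DiaArr a b)"
      by (rule L.DiaR[of x a y]) (use DiaArr in auto)
  qed
qed

lemma madd_cases:
  assumes "add_mset a J = add_mset b I"
  obtains "a = b" "J = I" | K where "J = add_mset b K" "I = add_mset a K"
  using assms by (metis add_eq_conv_ex)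

lemma labs_simps:
  "labs E I u = elabs E \<union> ilabs I \<union> {fst u}" by (simp add: labs_def)

lemma gen:
  assumes "L E J u"
  and "J = add_mset (x,\<phi>) I" "Q E I" "B \<inter> labs E J u = {}"
  and fB: "finite B" and nb: "\<phi> \<noteq> Bot"
  and Qw: "\<And>E I z c. Q E I \<Longrightarrow> Q E (add_mset (z,c) I)"
  and QwE: "\<And>E I v. Q E I \<Longrightarrow> Q (add_mset v E) I"
  and Qand: "\<And>E I z c d. Q E (add_mset (z, And c d) I) \<Longrightarrow> Q E (add_mset (z,c) (add_mset (z,d) I))"
  and Qor1: "\<And>E I z c d. Q E (add_mset (z, Or c d) I) \<Longrightarrow> Q E (add_mset (z,c) I)"
  and Qor2: "\<And>E I z c d. Q E (add_mset (z, Or c d) I) \<Longrightarrow> Q E (add_mset (z,d) I)"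
  and Qimp: "\<And>E I z c d. Q E (add_mset (z, Imp c d) I) \<Longrightarrow> Q E (add_mset (z,d) I)"
  and Qdia: "\<And>E I z c d y. Q E (add_mset (z, DiaArr c d) I) \<Longrightarrow> y \<notin> elabs E \<Longrightarrow> y \<notin> ilabs I
      \<Longrightarrow> y \<noteq> z \<Longrightarrow> y \<noteq> x \<Longrightarrow> y \<notin> B \<Longrightarrow> Q (add_mset (z,c,y) E) (add_mset (y,d) I)"
  and Pinit: "\<And>E I p. \<phi> = Atom p \<Longrightarrow> Q E I \<Longrightarrow> B \<inter> labs E (add_mset (x,\<phi>) I) (x,\<phi>) = {}
      \<Longrightarrow> L (E+N) (I+M) (x, Atom p)"
  and Pand: "\<And>E I u c d. \<phi> = And c d \<Longrightarrow> Q E I \<Longrightarrow> B \<inter> labs E (add_mset (x,\<phi>) I) u = {}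
      \<Longrightarrow> L E (add_mset (x,c) (add_mset (x,d) I)) u \<Longrightarrow> L (E+N) (I+M) u"
  and Por: "\<And>E I u c d. \<phi> = Or c d \<Longrightarrow> Q E I \<Longrightarrow> B \<inter> labs E (add_mset (x,\<phi>) I) u = {}
      \<Longrightarrow> L E (add_mset (x,c) I) u \<Longrightarrow> L E (add_mset (x,d) I) u \<Longrightarrow> L (E+N) (I+M) u"
  and Pimp: "\<And>E I u c d. \<phi> = Imp c d \<Longrightarrow> Q E I \<Longrightarrow> B \<inter> labs E (add_mset (x,\<phi>) I) u = {}
      \<Longrightarrow> L (E+N) (I+M) (x,c) \<Longrightarrow> L E (add_mset (x,d) I) u \<Longrightarrow> L (E+N) (I+M) u"
  and Pbox: "\<And>E I u c d e z. \<phi> = BoxArr c d \<Longrightarrow> Q E I \<Longrightarrow> B \<inter> labs E (add_mset (x,\<phi>) I) u = {}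
      \<Longrightarrow> (x,e,z) \<in># E \<Longrightarrow> Lio c e \<Longrightarrow> Lio e c \<Longrightarrow> L (E+N) (add_mset (z,d) I + M) u
      \<Longrightarrow> L (E+N) (I+M) u"
  and Pdia: "\<And>E I u c d F. \<phi> = DiaArr c d \<Longrightarrow> Q E I \<Longrightarrow> B \<inter> labs E (add_mset (x,\<phi>) I) u = {}
      \<Longrightarrow> finite F \<Longrightarrow> (\<forall>y. y \<notin> F \<longrightarrow> L (add_mset (x,c,y) E) (add_mset (y,d) I) u)
      \<Longrightarrow> L (E+N) (I+M) u"
  shows "L (E+N) (I+M) u"
  using assms(1-4)
proof (induction arbitrary: I rule: L.induct)
  case (Init E z p K)
  from Init(1) show ?case
  proof (cases rule: madd_cases)
    case 1 then show ?thesis using Pinit[of p E I] Init by auto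
  next
    case (2 K') then show ?thesis by (simp add: L.Init)
  qed
next
  case (BotL E z K u)
  from BotL(1) show ?case
  proof (cases rule: madd_cases)
    case 1 then show ?thesis using nb by auto
  next
    case (2 K') then show ?thesis by (simp add: L.BotL)
  qed
next
  case (AndL E z a b K u)
  from AndL(3) show ?case
  proof (cases rule: madd_cases)
    case 1 then show ?thesis using Pand[of a b E I u] AndL by auto
  next
    case (2 K')
    have "L (E+N) (add_mset (z,a) (add_mset (z,b) K') + M) u"
      by (rule AndL.IH) (use 2 AndL Qand in \<open>auto simp: add_mset_commute labs_simps\<close>)
    then show ?thesis using 2 by (simp add: L.AndL)
  qed
next
  case (AndR E K z a b)
  show ?case
    by (rule L.AndR; rule AndR.IH) (use AndR in \<open>auto simp: labs_simps\<close>)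
next
  case (OrL E z a K u b)
  from OrL(5) show ?case
  proof (cases rule: madd_cases)
    case 1 then show ?thesis using Por[of a b E I u] OrL by auto
  next
    case (2 K')
    have "L (E+N) (add_mset (z,a) K' + M) u"
      by (rule OrL.IH) (use 2 OrL Qor1 in \<open>auto simp: add_mset_commute labs_simps\<close>)
    moreover have "L (E+N) (add_mset (z,b) K' + M) u"
      by (rule OrL.IH) (use 2 OrL Qor2 in \<open>auto simp: add_mset_commute labs_simps\<close>)
    ultimately show ?thesis using 2 by (simp add: L.OrL)
  qed
next
  case (OrR1 E K z a b)
  show ?case
    by (rule L.OrR1, rule OrR1.IH) (use OrR1 in \<open>auto simp: labs_simps\<close>)
next
  case (OrR2 E K z b a)
  show ?case
    by (rule L.OrR2, rule OrR2.IH) (use OrR2 in \<open>auto simp: labs_simps\<close>)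
next
  case (ImpL E z a b K u)
  from ImpL(5) show ?case
  proof (cases rule: madd_cases)
    case 1
    have "L (E+N) (I+M) (z,a)"
      by (rule ImpL.IH(1)) (use 1 ImpL in \<open>auto simp: labs_simps\<close>)
    then have "L (E+N) (I+M) (x,a)" using 1 by simp
    then show ?thesis using Pimp[of a b E I u] ImpL 1 by auto
  next
    case (2 K')
    have "L (E+N) (add_mset (z, Imp a b) K' + M) (z,a)"
      by (rule ImpL.IH(1)) (use 2 ImpL in \<open>auto simp: add_mset_commute labs_simps\<close>)
    moreover have "L (E+N) (add_mset (z,b) K' + M) u"
      by (rule ImpL.IH(2)) (use 2 ImpL Qimp in \<open>auto simp: add_mset_commute labs_simps\<close>)
    ultimately show ?thesis using 2 by (simp add: L.ImpL)
  qed
next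
  case (ImpR E z a K b)
  show ?case
  proof (rule L.ImpR)
    show "L (E+N) (add_mset (z,a) (I + M)) (z,b)"
      using ImpR.IH[of "add_mset (z,a) I"] ImpR Qw by (auto simp: add_mset_commute labs_simps)
  qed
next
  case (BoxL z e w E a b K u)
  from BoxL.prems(1) show ?case
  proof (cases rule: madd_cases)
    case 1
    have "L (E+N) (add_mset (w,b) I + M) u"
      by (rule BoxL.IH(3)) (use 1 BoxL Qw in \<open>auto simp: add_mset_commute labs_simps dest: elabs_mem\<close>)
    then show ?thesis using Pbox[of a b E I u e w] BoxL 1 by auto
  next
    case (2 K')
    have "L (E+N) (add_mset (w,b) (add_mset (z, BoxArr a b) K') + M) u"
      by (rule BoxL.IH(3)) (use 2 BoxL Qw in \<open>auto simp: add_mset_commute labs_simps dest: elabs_mem\<close>)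
    then show ?thesis using 2 BoxL.hyps(1-3) by (simp, intro L.BoxL[of z e w]) auto
  qed
next
  case (BoxR F z a E K b)
  show ?case
  proof (rule L.BoxR[of "F \<union> B"])
    show "finite (F \<union> B)" using BoxR fB by auto
    show "\<forall>y. y \<notin> F \<union> B \<longrightarrow> L (add_mset (z, a, y) (E + N)) (I + M) (y, b)"
    proof (intro allI impI)
      fix y assume "y \<notin> F \<union> B"
      then have y: "y \<notin> F" "y \<notin> B" by auto
      have "L (add_mset (z, a, y) E + N) (I + M) (y, b)"
        using BoxR(2) y BoxR(3-) QwE by (auto simp: labs_simps)
      then show "L (add_mset (z, a, y) (E + N)) (I + M) (y, b)" by simp
    qed
  qed
next
  case (DiaL F z a E b K u)
  from DiaL(3) show ?case
  proof (cases rule: madd_cases)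
    case 1 then show ?thesis using Pdia[of a b E I u F] DiaL by auto
  next
    case (2 K')
    show ?thesis unfolding 2
    proof (simp, rule L.DiaL[of "F \<union> B \<union> labs E (add_mset (z, DiaArr a b) K) u"])
      show "finite (F \<union> B \<union> labs E (add_mset (z, DiaArr a b) K) u)" using DiaL fB by auto
      show "\<forall>y. y \<notin> F \<union> B \<union> labs E (add_mset (z, DiaArr a b) K) u \<longrightarrow>
          L (add_mset (z, a, y) (E + N)) (add_mset (y, b) (K' + M)) u"
      proof (intro allI impI)
        fix y assume y: "y \<notin> F \<union> B \<union> labs E (add_mset (z, DiaArr a b) K) u"
        have yF: "y \<notin> F" using y by auto
        have IHy: "\<forall>I. add_mset (y, b) K = add_mset (x, \<phi>) I \<longrightarrow> Q (add_mset (z, a, y) E) I \<longrightarrow>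
             B \<inter> labs (add_mset (z, a, y) E) (add_mset (y, b) K) u = {} \<longrightarrow> L (add_mset (z, a, y) E + N) (I + M) u"
          using DiaL(2) yF by blast
        have "L (add_mset (z, a, y) E + N) (add_mset (y, b) K' + M) u"
          proof (rule IHy[rule_format])
            show "add_mset (y, b) K = add_mset (x, \<phi>) (add_mset (y, b) K')"
              using 2 by (simp add: add_mset_commute)
            show "Q (add_mset (z, a, y) E) (add_mset (y, b) K')"
              by (rule Qdia) (use 2 DiaL y in \<open>auto simp: labs_simps\<close>)
            show "B \<inter> labs (add_mset (z, a, y) E) (add_mset (y, b) K) u = {}"
              using DiaL(5) y by (auto simp: labs_simps)
          qed
        then show "L (add_mset (z, a, y) (E + N)) (add_mset (y, b) (K' + M)) u" by simp
      qed
    qed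
  qed
next
  case (DiaR z e w E a K b)
  have "L (E+N) (I+M) (w,b)"
    by (rule DiaR.IH(3)) (use DiaR in \<open>auto simp: labs_simps dest: elabs_mem\<close>)
  then show ?case using DiaR.hyps(1-3) by (intro L.DiaR[of z e w]) auto
qed

lemma inv_and:
  assumes "L E (add_mset (x, And a b) I) u"
  shows "L E (add_mset (x,a) (add_mset (x,b) I)) u"
proof -
  have "L (E + {#}) (I + {#(x,a),(x,b)#}) u"
    by (rule gen[OF assms refl, where Q="\<lambda>_ _. True" and B="{}"]) (auto simp: add_mset_commute)
  then show ?thesis by (simp add: add_mset_commute)
qed

lemma inv_or1:
  assumes "L E (add_mset (x, Or a b) I) u"
  shows "L E (add_mset (x,a) I) u"
proof -
  have "L (E + {#}) (I + {#(x,a)#}) u"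
    by (rule gen[OF assms refl, where Q="\<lambda>_ _. True" and B="{}"]) (auto simp: add_mset_commute)
  then show ?thesis by (simp add: add_mset_commute)
qed

lemma inv_or2:
  assumes "L E (add_mset (x, Or a b) I) u"
  shows "L E (add_mset (x,b) I) u"
proof -
  have "L (E + {#}) (I + {#(x,b)#}) u"
    by (rule gen[OF assms refl, where Q="\<lambda>_ _. True" and B="{}"]) (auto simp: add_mset_commute)
  then show ?thesis by (simp add: add_mset_commute)
qed

lemma inv_imp:
  assumes "L E (add_mset (x, Imp a b) I) u"
  shows "L E (add_mset (x,b) I) u"
proof -
  have "L (E + {#}) (I + {#(x,b)#}) u"
    by (rule gen[OF assms refl, where Q="\<lambda>_ _. True" and B="{}"]) (auto simp: add_mset_commute)
  then show ?thesis by (simp add: add_mset_commute)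
qed

lemma inv_dia:
  assumes "L E (add_mset (x, DiaArr a b) I) u" "y \<notin> labs E (add_mset (x, DiaArr a b) I) u"
  shows "L (add_mset (x,a,y) E) (add_mset (y,b) I) u"
proof -
  have "L (E + {#(x,a,y)#}) (I + {#(y,b)#}) u"
  proof (rule gen[OF assms(1) refl, where Q="\<lambda>_ _. True" and B="{y}"])
    fix E' I' u' c d F
    assume h: "DiaArr a b = DiaArr c d" "{y} \<inter> labs E' (add_mset (x, DiaArr a b) I') u' = {}"
      "finite F" "\<forall>y. y \<notin> F \<longrightarrow> L (add_mset (x, c, y) E') (add_mset (y, d) I') u'"
    obtain y' where y': "y' \<notin> F \<union> labs E' (add_mset (x, DiaArr a b) I') u' \<union> {y}"
      using ex_fresh[of "F \<union> labs E' (add_mset (x, DiaArr a b) I') u' \<union> {y}"] h(3) by auto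
    have "L (add_mset (x, a, y') E') (add_mset (y', b) I') u'" using h y' by auto
    then have "L (add_mset (x, a, y) E') (add_mset (y, b) I') u'"
      by (rule ren_fresh_edge_in) (use y' in \<open>auto simp: labs_simps\<close>)
    then show "L (E' + {#(x, a, y)#}) (I' + {#(y, b)#}) u'" by simp
  qed (use assms(2) in auto)
  then show ?thesis by simp
qed

lemma contr_atom:
  assumes "L E (add_mset (x, Atom p) I) u" "(x, Atom p) \<in># I"
  shows "L E I u"
proof -
  have "L (E + {#}) (I + {#}) u"
    by (rule gen[OF assms(1) refl, where Q="\<lambda>_ I. (x, Atom p) \<in># I" and B="{}"])
       (use assms(2) in \<open>auto intro: L.Init[of _ x p, simplified] dest: multi_member_split\<close>)
  then show ?thesis by simp
qed

lemma edge_rm: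
  assumes "L E' I u" "E' = add_mset (x,a,z) E" "(x,e,z) \<in># E" "Lio a e" "Lio e a"
    and tr: "\<And>c d. Lio c a \<Longrightarrow> Lio a d \<Longrightarrow> Lio c d"
  shows "L E I u"
  using assms(1-3)
proof (induction arbitrary: E rule: L.induct)
  case (BoxL x' e' z' E'' a' b I u)
  have "L E (add_mset (z', b) (add_mset (x', BoxArr a' b) I)) u"
    using BoxL by auto
  show ?case
  proof (cases "(x',e',z') = (x,a,z)")
    case True
    then show ?thesis using BoxL tr assms(4,5) \<open>L E (add_mset (z', b) (add_mset (x', BoxArr a' b) I)) u\<close>
      by (auto intro!: L.BoxL[of x e z])
  next
    case False
    then have "(x',e',z') \<in># E" using BoxL by auto
    then show ?thesis using BoxL \<open>L E (add_mset (z', b) (add_mset (x', BoxArr a' b) I)) u\<close>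
      by (auto intro!: L.BoxL[of x' e' z'])
  qed
next
  case (DiaR x' e' z' E'' a' I b)
  have "L E I (z',b)"
    using DiaR by auto
  show ?case
  proof (cases "(x',e',z') = (x,a,z)")
    case True
    then show ?thesis using DiaR tr assms(4,5) \<open>L E I (z',b)\<close>
      by (auto intro!: L.DiaR[of x e z])
  next
    case False
    then have "(x',e',z') \<in># E" using DiaR by auto
    then show ?thesis using DiaR \<open>L E I (z',b)\<close>
      by (auto intro!: L.DiaR[of x' e' z'])
  qed
next
  case (BoxR F x' a' E'' I b)
  show ?case
    by (rule L.BoxR[of F]) (use BoxR in \<open>auto simp: add_mset_commute\<close>)
next
  case (DiaL F x' a' E'' b I u)
  show ?case
    by (rule L.DiaL[of F]) (use DiaL in \<open>auto simp: add_mset_commute\<close>)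
qed (auto intro: L.intros)

lemma inv_dia':
  assumes "L E (add_mset (z, DiaArr c d) I) (w,f)" "y \<notin> elabs E" "y \<notin> ilabs I" "y \<noteq> z" "y \<noteq> w"
  shows "L (add_mset (z,c,y) E) (add_mset (y,d) I) (w,f)"
  by (rule inv_dia) (use assms in \<open>auto simp: labs_simps\<close>)

lemma cm: "add_mset a (add_mset b M) = add_mset b (add_mset a M)" by (rule add_mset_commute)

definition cut_at :: "'a fm \<Rightarrow> bool" where
  "cut_at \<phi> \<longleftrightarrow> (\<forall>E I x u. L E I (x,\<phi>) \<longrightarrow> L E (add_mset (x,\<phi>) I) u \<longrightarrow> L E I u)"

lemma cutD: "cut_at \<phi> \<Longrightarrow> L E I (x,\<phi>) \<Longrightarrow> L E (add_mset (x,\<phi>) I) u \<Longrightarrow> L E I u"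
  unfolding cut_at_def by blast

lemma cut_trans: "cut_at a \<Longrightarrow> Lio c a \<Longrightarrow> Lio a d \<Longrightarrow> Lio c d"
  by (erule cutD, assumption, subst cm, erule weak1)

lemma cutB:
  fixes \<phi> :: "'a fm"
  assumes sub: "\<And>\<psi>::'a fm. size \<psi> < size \<phi> \<Longrightarrow> cut_at \<psi>"
  shows "L E I v \<Longrightarrow> v = (x,\<phi>) \<Longrightarrow> L E (add_mset (x,\<phi>) I) u \<Longrightarrow> L E I u"
proof (induction arbitrary: u rule: L.induct)
  case (Init E z p K)
  then show ?case using contr_atom[of E x p "add_mset (x, Atom p) K" u] by auto
next
  case (BotL E z K v)
  show ?case by (rule L.BotL)
next
  case (AndL E z a b K v)
  have "L E (add_mset (x,\<phi>) (add_mset (z,a) (add_mset (z,b) K))) u"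
    using inv_and[of E z a b "add_mset (x,\<phi>) K" u] AndL.prems(2) by (simp add: cm)
  then show ?case by (rule L.AndL[OF AndL.IH[OF AndL.prems(1)]])
next
  case (OrL E z a K v b)
  have "L E (add_mset (x,\<phi>) (add_mset (z,a) K)) u"
    using inv_or1[of E z a b "add_mset (x,\<phi>) K" u] OrL.prems(2) by (simp add: cm)
  moreover have "L E (add_mset (x,\<phi>) (add_mset (z,b) K)) u"
    using inv_or2[of E z a b "add_mset (x,\<phi>) K" u] OrL.prems(2) by (simp add: cm)
  ultimately show ?case by (rule L.OrL[OF OrL.IH(1)[OF OrL.prems(1)] OrL.IH(2)[OF OrL.prems(1)]])
next
  case (ImpL E z a b K v)
  have "L E (add_mset (x,\<phi>) (add_mset (z,b) K)) u"
    using inv_imp[of E z a b "add_mset (x,\<phi>) K" u] ImpL.prems(2) by (simp add: cm)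
  then show ?case by (rule L.ImpL[OF ImpL.hyps(1) ImpL.IH(2)[OF ImpL.prems(1)]])
next
  case (BoxL z e w E a b K v)
  have "L E (add_mset (x,\<phi>) (add_mset (w, b) (add_mset (z, BoxArr a b) K))) u"
    using weak1[OF BoxL.prems(2), of "(w,b)"] by (simp add: cm)
  then show ?case by (rule L.BoxL[OF BoxL.hyps(1-3) BoxL.IH(3)[OF BoxL.prems(1)]])
next
  case (DiaL F z a E b K v)
  show ?case
  proof (rule L.DiaL[of "F \<union> labs E (add_mset (x,\<phi>) (add_mset (z, DiaArr a b) K)) u"], simp add: DiaL, intro allI impI)
    fix y assume y: "y \<notin> F \<union> labs E (add_mset (x,\<phi>) (add_mset (z, DiaArr a b) K)) u"
    have "L (add_mset (z,a,y) E) (add_mset (y,b) (add_mset (x,\<phi>) K)) u"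
      by (rule inv_dia) (use y DiaL.prems(2) in \<open>auto simp: labs_simps cm\<close>)
    moreover have yF: "y \<notin> F" using y by auto
    ultimately show "L (add_mset (z,a,y) E) (add_mset (y,b) K) u"
      using DiaL(2) DiaL.prems(1) by (cases u) (auto simp: cm)
  qed
next
  case (AndR E I z a b)
  then have eq: "z = x" "\<phi> = And a b" by auto
  have ca: "cut_at a" by (rule sub) (simp add: eq)
  have cb: "cut_at b" by (rule sub) (simp add: eq)
  have "L (E + {#}) (I + {#}) u"
  proof (rule gen[OF AndR.prems(2)[unfolded eq(2)] refl, where Q="\<lambda>E I. L E I (x,a) \<and> L E I (x,b)" and B="{}"])
    fix E' I' u' c d
    assume h: "And a b = And c d" "L E' I' (x, a) \<and> L E' I' (x, b)"
      "L E' (add_mset (x, c) (add_mset (x, d) I')) u'"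
    have "L E' (add_mset (x, b) I') u'"
      by (rule cutD[OF ca]) (use h in \<open>auto intro: weak1\<close>)
    then show "L (E' + {#}) (I' + {#}) u'" using cutD[OF cb, of E' I' x u'] h by auto
  qed (use AndR eq in \<open>auto intro: weak1 weakE1 inv_and inv_or1 inv_or2 inv_imp inv_dia'\<close>)
  then show ?case by simp
next
  case (OrR1 E I z a b)
  then have eq: "z = x" "\<phi> = Or a b" by auto
  have ca: "cut_at a" by (rule sub) (simp add: eq)
  have "L (E + {#}) (I + {#}) u"
  proof (rule gen[OF OrR1.prems(2)[unfolded eq(2)] refl, where Q="\<lambda>E I. L E I (x,a)" and B="{}"])
    fix E' I' u' c d
    assume h: "Or a b = Or c d" "L E' I' (x, a)" "L E' (add_mset (x, c) I') u'"
    show "L (E' + {#}) (I' + {#}) u'" using cutD[OF ca, of E' I' x u'] h by auto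
  qed (use OrR1 eq in \<open>auto intro: weak1 weakE1 inv_and inv_or1 inv_or2 inv_imp inv_dia'\<close>)
  then show ?case by simp
next
  case (OrR2 E I z b a)
  then have eq: "z = x" "\<phi> = Or a b" by auto
  have cb: "cut_at b" by (rule sub) (simp add: eq)
  have "L (E + {#}) (I + {#}) u"
  proof (rule gen[OF OrR2.prems(2)[unfolded eq(2)] refl, where Q="\<lambda>E I. L E I (x,b)" and B="{}"])
    fix E' I' u' c d
    assume h: "Or a b = Or c d" "L E' I' (x, b)" "L E' (add_mset (x, d) I') u'"
    show "L (E' + {#}) (I' + {#}) u'" using cutD[OF cb, of E' I' x u'] h by auto
  qed (use OrR2 eq in \<open>auto intro: weak1 weakE1 inv_and inv_or1 inv_or2 inv_imp inv_dia'\<close>)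
  then show ?case by simp
next
  case (ImpR E z a I b)
  then have eq: "z = x" "\<phi> = Imp a b" by auto
  have ca: "cut_at a" by (rule sub) (simp add: eq)
  have cb: "cut_at b" by (rule sub) (simp add: eq)
  have "L (E + {#}) (I + {#}) u"
  proof (rule gen[OF ImpR.prems(2)[unfolded eq(2)] refl, where Q="\<lambda>E I. L E (add_mset (x,a) I) (x,b)" and B="{}"])
    fix E' I' u' c d
    assume h: "Imp a b = Imp c d" "L E' (add_mset (x,a) I') (x,b)" "L (E' + {#}) (I' + {#}) (x, c)"
       "L E' (add_mset (x, d) I') u'"
    have "L E' I' (x,b)" using cutD[OF ca, of E' I' x "(x,b)"] h by auto
    then show "L (E' + {#}) (I' + {#}) u'" using cutD[OF cb, of E' I' x u'] h by auto
  next
    fix E' I' z' c'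
    assume "L E' (add_mset (x,a) I') (x,b)"
    then show "L E' (add_mset (x,a) (add_mset (z',c') I')) (x,b)" by (subst cm, rule weak1)
  next
    fix E' I' z' c' d'
    assume "L E' (add_mset (x,a) (add_mset (z', And c' d') I')) (x,b)"
    then show "L E' (add_mset (x,a) (add_mset (z',c') (add_mset (z',d') I'))) (x,b)"
      using inv_and[of E' z' c' d' "add_mset (x,a) I'" "(x,b)"] by (simp add: cm)
  next
    fix E' I' z' c' d'
    assume "L E' (add_mset (x,a) (add_mset (z', Or c' d') I')) (x,b)"
    then show "L E' (add_mset (x,a) (add_mset (z',c') I')) (x,b)"
      using inv_or1[of E' z' c' d' "add_mset (x,a) I'" "(x,b)"] by (simp add: cm)
  next
    fix E' I' z' c' d'
    assume "L E' (add_mset (x,a) (add_mset (z', Or c' d') I')) (x,b)"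
    then show "L E' (add_mset (x,a) (add_mset (z',d') I')) (x,b)"
      using inv_or2[of E' z' c' d' "add_mset (x,a) I'" "(x,b)"] by (simp add: cm)
  next
    fix E' I' z' c' d'
    assume "L E' (add_mset (x,a) (add_mset (z', Imp c' d') I')) (x,b)"
    then show "L E' (add_mset (x,a) (add_mset (z',d') I')) (x,b)"
      using inv_imp[of E' z' c' d' "add_mset (x,a) I'" "(x,b)"] by (simp add: cm)
  next
    fix E' I' z' c' d' y
    assume "L E' (add_mset (x,a) (add_mset (z', DiaArr c' d') I')) (x,b)" "y \<notin> elabs E'"
      "y \<notin> ilabs I'" "y \<noteq> z'" "y \<noteq> x" "y \<notin> {}"
    then show "L (add_mset (z',c',y) E') (add_mset (x,a) (add_mset (y,d') I')) (x,b)"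
      using inv_dia'[of E' z' c' d' "add_mset (x,a) I'" x b y] by (simp add: cm)
  qed (use ImpR eq in \<open>auto intro: weak1 weakE1\<close>)
  then show ?case by simp
next
  case (BoxR F z a E I b)
  then have eq: "z = x" "\<phi> = BoxArr a b" by auto
  have ca: "cut_at a" by (rule sub) (simp add: eq)
  have cb: "cut_at b" by (rule sub) (simp add: eq)
  let ?Q = "\<lambda>E I. \<exists>F. finite F \<and> (\<forall>y. y \<notin> F \<longrightarrow> L (add_mset (x,a,y) E) I (y,b))"
  have "L (E + {#}) (I + {#}) u"
  proof (rule gen[OF BoxR.prems(2)[unfolded eq(2)] refl, where Q="?Q" and B="{}"])
    show "?Q E I" using BoxR eq by auto
  next
    fix E' I' u' c d e w
    assume h: "BoxArr a b = BoxArr c d" "?Q E' I'" "(x, e, w) \<in># E'" "Lio c e" "Lio e c"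
      "L (E' + {#}) (add_mset (w, d) I' + {#}) u'"
    from h(2) obtain F' where F': "finite F'" "\<forall>y. y \<notin> F' \<longrightarrow> L (add_mset (x,a,y) E') I' (y,b)" by blast
    obtain y where y: "y \<notin> F' \<union> labs E' I' (x,a) \<union> {w}"
      using ex_fresh[of "F' \<union> labs E' I' (x,a) \<union> {w}"] F' by auto
    have "L (add_mset (x,a,y) E') I' (y,b)" using F' y by auto
    then have "L (add_mset (x,a,w) E') I' (w,b)"
      by (rule ren_fresh_edge_out) (use y in \<open>auto simp: labs_simps\<close>)
    then have "L E' I' (w,b)"
      by (rule edge_rm[OF _ refl h(3)]) (use h cut_trans[OF ca] in auto)
    then show "L (E' + {#}) (I' + {#}) u'" using cutD[OF cb, of E' I' w u'] h by auto
  next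
    fix E' I' z' c'
    assume "?Q E' I'"
    then show "?Q E' (add_mset (z',c') I')" by (auto intro: weak1)
  next
    fix E' I' v
    assume "?Q E' I'"
    then show "?Q (add_mset v E') I'" by (auto simp: cm intro: weakE1)
  next
    fix E' I' z' c' d'
    assume "?Q E' (add_mset (z', And c' d') I')"
    then show "?Q E' (add_mset (z',c') (add_mset (z',d') I'))" by (auto intro: inv_and)
  next
    fix E' I' z' c' d'
    assume "?Q E' (add_mset (z', Or c' d') I')"
    then show "?Q E' (add_mset (z',c') I')" by (auto intro: inv_or1)
  next
    fix E' I' z' c' d'
    assume "?Q E' (add_mset (z', Or c' d') I')"
    then show "?Q E' (add_mset (z',d') I')" by (auto intro: inv_or2)
  next
    fix E' I' z' c' d'
    assume "?Q E' (add_mset (z', Imp c' d') I')"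
    then show "?Q E' (add_mset (z',d') I')" by (auto intro: inv_imp)
  next
    fix E' I' z' c' d' y0
    assume h: "?Q E' (add_mset (z', DiaArr c' d') I')" "y0 \<notin> elabs E'"
      "y0 \<notin> ilabs I'" "y0 \<noteq> z'" "y0 \<noteq> x" "y0 \<notin> {}"
    from h(1) obtain F' where F': "finite F'" "\<forall>y. y \<notin> F' \<longrightarrow> L (add_mset (x,a,y) E') (add_mset (z', DiaArr c' d') I') (y,b)" by blast
    show "?Q (add_mset (z',c',y0) E') (add_mset (y0,d') I')"
    proof (rule exI[of _ "insert y0 F'"], intro conjI allI impI)
      show "finite (insert y0 F')" using F' by auto
      fix y assume y: "y \<notin> insert y0 F'"
      have "L (add_mset (z',c',y0) (add_mset (x,a,y) E')) (add_mset (y0,d') I') (y,b)"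
        by (rule inv_dia') (use F' y h in auto)
      then show "L (add_mset (x, a, y) (add_mset (z', c', y0) E')) (add_mset (y0, d') I') (y, b)"
        by (simp add: cm)
    qed
  qed (use eq in auto)
  then show ?case by simp
next
  case (DiaR z e w E a I b)
  then have eq: "z = x" "\<phi> = DiaArr a b" by auto
  have ca: "cut_at a" by (rule sub) (simp add: eq)
  have cb: "cut_at b" by (rule sub) (simp add: eq)
  let ?Q = "\<lambda>E I. \<exists>e w. (x,e,w) \<in># E \<and> Lio a e \<and> Lio e a \<and> L E I (w,b)"
  have "L (E + {#}) (I + {#}) u"
  proof (rule gen[OF DiaR.prems(2)[unfolded eq(2)] refl, where Q="?Q" and B="{}"])
    show "?Q E I" using DiaR eq by auto
  next
    fix E' I' u' c d F
    assume h: "DiaArr a b = DiaArr c d" "?Q E' I'" "{} \<inter> labs E' (add_mset (x, DiaArr a b) I') u' = {}"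
      "finite F" "\<forall>y. y \<notin> F \<longrightarrow> L (add_mset (x, c, y) E') (add_mset (y, d) I') u'"
    from h(2) obtain e' w' where ew: "(x,e',w') \<in># E'" "Lio a e'" "Lio e' a" "L E' I' (w',b)" by blast
    obtain y where y: "y \<notin> F \<union> labs E' I' u' \<union> {x}"
      using ex_fresh[of "F \<union> labs E' I' u' \<union> {x}"] h by auto
    have "L (add_mset (x,a,y) E') (add_mset (y,b) I') u'" using h y by auto
    then have "L (add_mset (x,a,w') E') (add_mset (w',b) I') u'"
      by (rule ren_fresh_edge_in) (use y in \<open>auto simp: labs_simps\<close>)
    then have "L E' (add_mset (w',b) I') u'"
      by (rule edge_rm[OF _ refl ew(1)]) (use ew cut_trans[OF ca] in auto)
    then show "L (E' + {#}) (I' + {#}) u'" using cutD[OF cb, of E' I' w' u'] ew by auto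
  next
    fix E' I' z' c'
    assume "?Q E' I'"
    then show "?Q E' (add_mset (z',c') I')" by (auto intro: weak1)
  next
    fix E' I' v
    assume "?Q E' I'"
    then show "?Q (add_mset v E') I'" by (auto intro: weakE1)
  next
    fix E' I' z' c' d'
    assume "?Q E' (add_mset (z', And c' d') I')"
    then show "?Q E' (add_mset (z',c') (add_mset (z',d') I'))" by (auto intro: inv_and)
  next
    fix E' I' z' c' d'
    assume "?Q E' (add_mset (z', Or c' d') I')"
    then show "?Q E' (add_mset (z',c') I')" by (auto intro: inv_or1)
  next
    fix E' I' z' c' d'
    assume "?Q E' (add_mset (z', Or c' d') I')"
    then show "?Q E' (add_mset (z',d') I')" by (auto intro: inv_or2)
  next
    fix E' I' z' c' d'
    assume "?Q E' (add_mset (z', Imp c' d') I')"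
    then show "?Q E' (add_mset (z',d') I')" by (auto intro: inv_imp)
  next
    fix E' I' z' c' d' y0
    assume h: "?Q E' (add_mset (z', DiaArr c' d') I')" "y0 \<notin> elabs E'"
      "y0 \<notin> ilabs I'" "y0 \<noteq> z'" "y0 \<noteq> x" "y0 \<notin> {}"
    from h(1) obtain e' w' where ew: "(x,e',w') \<in># E'" "Lio a e'" "Lio e' a"
       "L E' (add_mset (z', DiaArr c' d') I') (w',b)" by blast
    have "y0 \<noteq> w'" using ew(1) h(2) elabs_mem by fastforce
    then have "L (add_mset (z',c',y0) E') (add_mset (y0,d') I') (w',b)"
      by (intro inv_dia') (use ew h in auto)
    then show "?Q (add_mset (z',c',y0) E') (add_mset (y0,d') I')" using ew by auto
  qed (use eq in auto)
  then show ?case by simp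
qed

lemma cut_all: "cut_at \<phi>"
proof (induction \<phi> rule: measure_induct_rule[of size])
  case (less \<phi>)
  show ?case unfolding cut_at_def using cutB[OF less] by blast
qed

lemma cut: "L E I (x,\<phi>) \<Longrightarrow> L E (add_mset (x,\<phi>) I) u \<Longrightarrow> L E I u"
  using cutD[OF cut_all] .

lemma ident': "(x,\<phi>) \<in># I \<Longrightarrow> L E I (x,\<phi>)"
  by (metis ident insert_DiffM)

lemma contr: "L E (add_mset v I) u \<Longrightarrow> v \<in># I \<Longrightarrow> L E I u"
  by (cases v) (auto intro: cut ident')

lemma mp_mem: "(x, Imp a b) \<in># I \<Longrightarrow> L E I (x,a) \<Longrightarrow> L E (add_mset (x,b) I) u \<Longrightarrow> L E I u"
  by (rule contr[of E "(x, Imp a b)"], rule L.ImpL) (auto intro: weak1)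

lemma boxL_mem: "(x, BoxArr a b) \<in># I \<Longrightarrow> (x,e,z) \<in># E \<Longrightarrow> Lio a e \<Longrightarrow> Lio e a
   \<Longrightarrow> L E (add_mset (z,b) I) u \<Longrightarrow> L E I u"
  by (rule contr[of E "(x, BoxArr a b)"], rule L.BoxL, assumption+, subst cm, rule weak1)

lemma andL_mem: "(x, And a b) \<in># I \<Longrightarrow> L E (add_mset (x,a) (add_mset (x,b) I)) u \<Longrightarrow> L E I u"
  by (rule contr[of E "(x, And a b)"], rule L.AndL) (auto intro: weak1)

lemma orL_mem: "(x, Or a b) \<in># I \<Longrightarrow> L E (add_mset (x,a) I) u \<Longrightarrow> L E (add_mset (x,b) I) u \<Longrightarrow> L E I u"
  by (rule contr[of E "(x, Or a b)"], rule L.OrL) (auto intro: weak1)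

lemma diaL_mem: "(x, DiaArr a b) \<in># I \<Longrightarrow> (\<And>y. L (add_mset (x,a,y) E) (add_mset (y,b) I) u) \<Longrightarrow> L E I u"
  by (rule contr[of E "(x, DiaArr a b)"], rule L.DiaL[of "{}"]) (auto intro: weak1)

lemma boxR': "(\<And>y. L (add_mset (x,a,y) E) I (y,b)) \<Longrightarrow> L E I (x, BoxArr a b)"
  by (rule L.BoxR[of "{}"]) auto

lemma impR_inv: "L E I (x, Imp a b) \<Longrightarrow> L E (add_mset (x,a) I) (x,b)"
  by (rule cut[of _ _ x "Imp a b"], erule weak1, rule mp_mem[of x a b]) (auto intro: ident')

lemma andR_inv1: "L E I (x, And a b) \<Longrightarrow> L E I (x,a)"
  by (rule cut[of _ _ x "And a b"], assumption, rule andL_mem[of x a b]) (auto intro: ident')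
lemma andR_inv2: "L E I (x, And a b) \<Longrightarrow> L E I (x,b)"
  by (rule cut[of _ _ x "And a b"], assumption, rule andL_mem[of x a b]) (auto intro: ident')

lemma iff_io: "L {#} {#} (0, Iff a b) \<Longrightarrow> Lio a b \<and> Lio b a"
  unfolding Iff_def using impR_inv andR_inv1 andR_inv2 by fastforce

lemma io_iff: "Lio a b \<Longrightarrow> Lio b a \<Longrightarrow> L {#} {#} (0, Iff a b)"
  unfolding Iff_def by (auto intro!: L.AndR L.ImpR)

lemma io_ren: "Lio a b \<Longrightarrow> L E (add_mset (y,a) I) (y,b)"
proof -
  assume "Lio a b"
  from ren[OF this, of "\<lambda>_. y"] have "L {#} {#(y,a)#} (y,b)" by (simp add: renI_def)
  from weak[OF this, of E I] show ?thesis by simp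
qed

lemma top: "L E I (x, Top)"
  unfolding Top_def Neg_def by (rule L.ImpR, rule L.BotL)

lemma hilb: "hprov \<phi> \<Longrightarrow> L {#} {#} (0, \<phi>)"
proof (induction rule: hprov.induct)
  case (MP p q)
  have "L {#} {#(0,p)#} (0,q)" using impR_inv[OF MP.IH(1)] .
  then show ?case using cut[OF MP.IH(2)] by simp
next
  case (RA_Box p r q)
  from iff_io[OF RA_Box.IH] have h: "Lio p r" "Lio r p" by auto
  show ?case
  proof (rule io_iff)
    show "Lio (BoxArr p q) (BoxArr r q)"
      by (rule boxR', rule boxL_mem[of 0 p q _ r]) (use h in \<open>auto intro: ident\<close>)
    show "Lio (BoxArr r q) (BoxArr p q)"
      by (rule boxR', rule boxL_mem[of 0 r q _ p]) (use h in \<open>auto intro: ident\<close>)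
  qed
next
  case (RC_Box q c p)
  from iff_io[OF RC_Box.IH] have h: "Lio q c" "Lio c q" by auto
  show ?case
  proof (rule io_iff)
    show "Lio (BoxArr p q) (BoxArr p c)"
      by (rule boxR', rule boxL_mem[of 0 p q _ p]) (use h in \<open>auto intro: ident io_ren\<close>)
    show "Lio (BoxArr p c) (BoxArr p q)"
      by (rule boxR', rule boxL_mem[of 0 p c _ p]) (use h in \<open>auto intro: ident io_ren\<close>)
  qed
next
  case (RA_Dia p r q)
  from iff_io[OF RA_Dia.IH] have h: "Lio p r" "Lio r p" by auto
  show ?case
  proof (rule io_iff)
    show "Lio (DiaArr p q) (DiaArr r q)"
      by (rule diaL_mem[of 0 p q], simp, rule L.DiaR[of 0 p]) (use h in \<open>auto intro: ident\<close>)
    show "Lio (DiaArr r q) (DiaArr p q)"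
      by (rule diaL_mem[of 0 r q], simp, rule L.DiaR[of 0 r]) (use h in \<open>auto intro: ident\<close>)
  qed
next
  case (RC_Dia q c p)
  from iff_io[OF RC_Dia.IH] have h: "Lio q c" "Lio c q" by auto
  show ?case
  proof (rule io_iff)
    show "Lio (DiaArr p q) (DiaArr p c)"
      by (rule diaL_mem[of 0 p q], simp, rule L.DiaR[of 0 p]) (use h in \<open>auto intro: ident io_ren\<close>)
    show "Lio (DiaArr p c) (DiaArr p q)"
      by (rule diaL_mem[of 0 p c], simp, rule L.DiaR[of 0 p]) (use h in \<open>auto intro: ident io_ren\<close>)
  qed
next
  case (K p q) show ?case by (rule L.ImpR, rule L.ImpR, rule ident', simp)
next
  case (S p q r)
  show ?case
    by (intro L.ImpR, rule mp_mem[of 0 p "Imp q r"], simp, rule ident', simp,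
        rule mp_mem[of 0 q r], simp, rule mp_mem[of 0 p q], simp) (auto intro: ident')
next
  case (AndE1 p q) show ?case by (rule L.ImpR, rule L.AndL, rule ident', simp)
next
  case (AndE2 p q) show ?case by (rule L.ImpR, rule L.AndL, rule ident', simp)
next
  case (AndI p q) show ?case by (rule L.ImpR, rule L.ImpR, rule L.AndR; rule ident', simp)
next
  case (OrI1 p q) show ?case by (rule L.ImpR, rule L.OrR1, rule ident', simp)
next
  case (OrI2 q p) show ?case by (rule L.ImpR, rule L.OrR2, rule ident', simp)
next
  case (OrE p r q)
  show ?case
    by (intro L.ImpR, rule orL_mem[of 0 p q], simp, rule mp_mem[of 0 p r], simp, rule ident', simp,
        rule ident', simp, rule mp_mem[of 0 q r], simp, rule ident', simp, rule ident', simp)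
next
  case (BotE p) show ?case by (rule L.ImpR, rule L.BotL)
next
  case (CM_Box p q c)
  show ?case
    by (intro L.ImpR L.AndR boxR'; rule boxL_mem[of 0 p "And q c" _ p], simp, simp, rule ident, rule ident,
        rule andL_mem, simp) (auto intro: ident')
next
  case (CC_Box p q c)
  show ?case
  proof (rule L.ImpR, rule L.AndL, rule boxR', rule L.AndR)
    fix y
    show "L (add_mset (0,p,y) {#}) (add_mset (0, BoxArr p q) (add_mset (0, BoxArr p c) {#})) (y,q)"
      by (rule boxL_mem[of 0 p q _ p y]) (auto intro: ident)
    show "L (add_mset (0,p,y) {#}) (add_mset (0, BoxArr p q) (add_mset (0, BoxArr p c) {#})) (y,c)"
      by (rule boxL_mem[of 0 p c _ p y]) (auto intro: ident)
  qed
next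
  case (CN_Box p)
  show ?case by (rule boxR', rule top)
next
  case (CM_Dia p q c)
  show ?case
  proof (rule L.ImpR, rule L.OrL)
    show "L {#} (add_mset (0, DiaArr p q) {#}) (0, DiaArr p (Or q c))"
    proof (rule diaL_mem[of 0 p q], simp)
      fix y
      show "L (add_mset (0,p,y) {#}) (add_mset (y,q) {#(0, DiaArr p q)#}) (0, DiaArr p (Or q c))"
        by (rule L.DiaR[of 0 p y], simp, rule ident, rule ident, rule L.OrR1, rule ident', simp)
    qed
    show "L {#} (add_mset (0, DiaArr p c) {#}) (0, DiaArr p (Or q c))"
    proof (rule diaL_mem[of 0 p c], simp)
      fix y
      show "L (add_mset (0,p,y) {#}) (add_mset (y,c) {#(0, DiaArr p c)#}) (0, DiaArr p (Or q c))"
        by (rule L.DiaR[of 0 p y], simp, rule ident, rule ident, rule L.OrR2, rule ident', simp)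
    qed
  qed
next
  case (CC_Dia p q c)
  show ?case
  proof (rule L.ImpR, rule diaL_mem[of 0 p "Or q c"], simp)
    fix y
    show "L (add_mset (0,p,y) {#}) (add_mset (y, Or q c) {#(0, DiaArr p (Or q c))#}) (0, Or (DiaArr p q) (DiaArr p c))"
    proof (rule orL_mem[of y q c], simp)
      show "L (add_mset (0,p,y) {#}) (add_mset (y,q) (add_mset (y, Or q c) {#(0, DiaArr p (Or q c))#})) (0, Or (DiaArr p q) (DiaArr p c))"
        by (rule L.OrR1, rule L.DiaR[of 0 p y], simp, rule ident, rule ident, rule ident', simp)
      show "L (add_mset (0,p,y) {#}) (add_mset (y,c) (add_mset (y, Or q c) {#(0, DiaArr p (Or q c))#})) (0, Or (DiaArr p q) (DiaArr p c))"
        by (rule L.OrR2, rule L.DiaR[of 0 p y], simp, rule ident, rule ident, rule ident', simp)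
    qed
  qed
next
  case (CN_Dia p)
  show ?case unfolding Neg_def
  proof (rule L.ImpR, rule diaL_mem[of 0 p Bot], simp)
    fix y
    show "L (add_mset (0,p,y) {#}) (add_mset (y, Bot) {#(0, DiaArr p Bot)#}) (0, Bot)"
      by (rule L.BotL)
  qed
next
  case (CW p q c)
  show ?case
  proof (rule L.ImpR, rule L.AndL, rule diaL_mem[of 0 p q], simp)
    fix y
    show "L (add_mset (0,p,y) {#}) (add_mset (y,q) {#(0, DiaArr p q), (0, BoxArr p c)#}) (0, DiaArr p (And q c))"
    proof (rule boxL_mem[of 0 p c _ p y], simp, simp, rule ident, rule ident)
      show "L (add_mset (0,p,y) {#}) (add_mset (y,c) (add_mset (y,q) {#(0, DiaArr p q), (0, BoxArr p c)#})) (0, DiaArr p (And q c))"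
        by (rule L.DiaR[of 0 p y], simp, rule ident, rule ident, rule L.AndR; rule ident', simp)
    qed
  qed
next
  case (CFS p q c)
  show ?case
  proof (rule L.ImpR, rule boxR', rule L.ImpR)
    fix y
    show "L (add_mset (0,p,y) {#}) (add_mset (y,q) {#(0, Imp (DiaArr p q) (BoxArr p c))#}) (y,c)"
    proof (rule mp_mem[of 0 "DiaArr p q" "BoxArr p c"], simp)
      show "L (add_mset (0,p,y) {#}) (add_mset (y,q) {#(0, Imp (DiaArr p q) (BoxArr p c))#}) (0, DiaArr p q)"
        by (rule L.DiaR[of 0 p y], simp, rule ident, rule ident, rule ident', simp)
      show "L (add_mset (0,p,y) {#}) (add_mset (0, BoxArr p c) (add_mset (y,q) {#(0, Imp (DiaArr p q) (BoxArr p c))#})) (y,c)"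
        by (rule boxL_mem[of 0 p c _ p y], simp, simp, rule ident, rule ident, rule ident', simp)
    qed
  qed
qed

definition nodes :: "nat \<Rightarrow> 'a edges \<Rightarrow> 'a ins \<Rightarrow> 'a ins \<Rightarrow> nat set" where
  "nodes r E I Os = insert r (elabs E \<union> ilabs I \<union> ilabs Os)"

lemma ilabs_Pair: "ilabs (image_mset (Pair r) X) \<subseteq> {r}"
  by (auto simp: ilabs_def)

lemma nodes_Pair[simp]: "nodes r E (image_mset (Pair r) X + I) (image_mset (Pair r) Y + Os) = nodes r E I Os"
  using ilabs_Pair[of r X] ilabs_Pair[of r Y] by (auto simp: nodes_def)

lemma nodes_child: "nodes r (add_mset (r,e,y) (E + E')) (I + I') (Os + Os') = nodes r E I Os \<union> nodes y E' I' Os'"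
  by (auto simp: nodes_def)

lemma r_in_nodes[simp]: "r \<in> nodes r E I Os" by (simp add: nodes_def)

inductive rep :: "nat \<Rightarrow> 'a seq \<Rightarrow> 'a edges \<Rightarrow> 'a ins \<Rightarrow> 'a ins \<Rightarrow> bool" where
  leaf: "rep r (Seq X Y {#}) {#} (image_mset (Pair r) X) (image_mset (Pair r) Y)"
| child: "rep r (Seq X Y Z) E I Os \<Longrightarrow> rep y N E' I' Os' \<Longrightarrow> nodes y E' I' Os' \<inter> nodes r E I Os = {}
    \<Longrightarrow> rep r (Seq X Y (add_mset (e,N) Z)) (add_mset (r,e,y) (E + E')) (I + I') (Os + Os')"

lemma rep_outs: "rep r S E I Os \<Longrightarrow> outs S = size Os"
  by (induction rule: rep.induct) auto

lemma rep_strip: "rep r S E I Os \<Longrightarrow> rep r (strip S) E I {#}"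
proof (induction rule: rep.induct)
  case (leaf r X Y)
  then show ?case using rep.leaf[of r X "{#}"] by simp
next
  case (child r X Y Z E I Os y N E' I' Os' e)
  have "rep r (Seq X {#} (add_mset (e, strip N) (image_mset (map_prod id strip) Z))) (add_mset (r,e,y) (E + E')) (I + I') ({#} + {#})"
    by (rule rep.child) (use child in \<open>auto simp: nodes_def\<close>)
  then show ?case by simp
qed

lemma rep_root:
  "rep r S E I Os \<Longrightarrow> S = Seq X Y Z \<Longrightarrow> \<exists>I1 Os1. I = image_mset (Pair r) X + I1 \<and> Os = image_mset (Pair r) Y + Os1
     \<and> r \<notin> ilabs I1 \<and> r \<notin> ilabs Os1 \<and> (\<forall>X' Y'. rep r (Seq X' Y' Z) E (image_mset (Pair r) X' + I1) (image_mset (Pair r) Y' + Os1))"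
proof (induction arbitrary: X Y Z rule: rep.induct)
  case (leaf r X Y)
  then show ?case by (auto intro: rep.leaf[of r, simplified])
next
  case (child r X0 Y0 Z0 E I Os y N E' I' Os' e)
  from child.prems have eq: "X = X0" "Y = Y0" "Z = add_mset (e,N) Z0" by auto
  from child.IH(1)[OF refl] obtain I1 Os1 where h: "I = image_mset (Pair r) X0 + I1" "Os = image_mset (Pair r) Y0 + Os1"
    "r \<notin> ilabs I1" "r \<notin> ilabs Os1" "\<forall>X' Y'. rep r (Seq X' Y' Z0) E (image_mset (Pair r) X' + I1) (image_mset (Pair r) Y' + Os1)"
    by blast
  have rI': "r \<notin> ilabs I'" "r \<notin> ilabs Os'" using child.hyps(3) by (auto simp: nodes_def)
  show ?case
  proof (intro exI conjI allI)
    show "I + I' = image_mset (Pair r) X + (I1 + I')" using h eq by simp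
    show "Os + Os' = image_mset (Pair r) Y + (Os1 + Os')" using h eq by simp
    show "r \<notin> ilabs (I1 + I')" "r \<notin> ilabs (Os1 + Os')" using h rI' by auto
    fix X' Y'
    have "rep r (Seq X' Y' (add_mset (e,N) Z0)) (add_mset (r,e,y) (E + E')) ((image_mset (Pair r) X' + I1) + I') ((image_mset (Pair r) Y' + Os1) + Os')"
      by (rule rep.child) (use h child.hyps in simp_all)
    then show "rep r (Seq X' Y' Z) (add_mset (r, e, y) (E + E')) (image_mset (Pair r) X' + (I1 + I')) (image_mset (Pair r) Y' + (Os1 + Os'))"
      using eq by (simp add: add.assoc)
  qed
qed

lemma rep_peel:
  "rep r S E I Os \<Longrightarrow> S = Seq X Y Z \<Longrightarrow> (r,e,z) \<in># E \<Longrightarrow> \<exists>N Z0 E0 I0 Os0 Ez Iz Osz. Z = add_mset (e,N) Z0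
     \<and> rep r (Seq X Y Z0) E0 I0 Os0 \<and> rep z N Ez Iz Osz \<and> nodes z Ez Iz Osz \<inter> nodes r E0 I0 Os0 = {}
     \<and> E = add_mset (r,e,z) (E0 + Ez) \<and> I = I0 + Iz \<and> Os = Os0 + Osz"
proof (induction arbitrary: X Y Z rule: rep.induct)
  case (leaf r X Y)
  then show ?case by simp
next
  case (child r X1 Y1 Z1 E1 I1 Os1 y N1 E' I' Os' e')
  show ?case
  proof (cases "(e,z) = (e',y)")
    case True
    then show ?thesis
      by (intro exI[of _ N1] exI[of _ Z1] exI[of _ E1] exI[of _ I1] exI[of _ Os1] exI[of _ E'] exI[of _ I'] exI[of _ Os'])
         (use child in auto)
  next
    case False
    have "(r,e,z) \<notin># E'"
    proof
      assume "(r,e,z) \<in># E'"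
      then have "r \<in> nodes y E' I' Os'" using elabs_mem[of r e z E'] by (auto simp: nodes_def)
      then show False using child.hyps(3) by auto
    qed
    then have "(r,e,z) \<in># E1" using child.prems False by auto
    from child.IH(1)[OF refl this] obtain N Z0 E0 I0 Os0 Ez Iz Osz where h:
      "Z1 = add_mset (e,N) Z0" "rep r (Seq X1 Y1 Z0) E0 I0 Os0" "rep z N Ez Iz Osz"
      "nodes z Ez Iz Osz \<inter> nodes r E0 I0 Os0 = {}" "E1 = add_mset (r,e,z) (E0 + Ez)" "I1 = I0 + Iz" "Os1 = Os0 + Osz"
      by blast
    have sub1: "nodes r E0 I0 Os0 \<subseteq> nodes r E1 I1 Os1" using h by (auto simp: nodes_def)
    have sub2: "nodes z Ez Iz Osz \<subseteq> nodes r E1 I1 Os1" using h by (auto simp: nodes_def)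
    have r1: "rep r (Seq X1 Y1 (add_mset (e',N1) Z0)) (add_mset (r,e',y) (E0 + E')) (I0 + I') (Os0 + Os')"
      by (rule rep.child[OF h(2) child.hyps(2)]) (use sub1 child.hyps(3) in blast)
    have d: "nodes z Ez Iz Osz \<inter> nodes r (add_mset (r,e',y) (E0 + E')) (I0 + I') (Os0 + Os') = {}"
      unfolding nodes_child using h(4) sub2 child.hyps(3) by blast
    show ?thesis
      apply (rule exI[of _ N], rule exI[of _ "add_mset (e',N1) Z0"], rule exI[of _ "add_mset (r,e',y) (E0 + E')"],
        rule exI[of _ "I0 + I'"], rule exI[of _ "Os0 + Os'"], rule exI[of _ Ez], rule exI[of _ Iz], rule exI[of _ Osz])
      using child.prems h r1 d by (auto simp: add_mset_commute ac_simps)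
  qed
qed

lemma nodes_sub: "x \<in> nodes r (A+B) (C+D) (F+H) \<Longrightarrow> nodes x A C F \<subseteq> nodes r (A+B) (C+D) (F+H)"
  by (auto simp: nodes_def)

lemma rep_locate:
  fixes S :: "'a seq"
  shows "rep r S E I Os \<Longrightarrow> x \<in> nodes r E I Os \<Longrightarrow> \<exists>G N Ex Ix Ox Ec Ic Oc. S = fill G N \<and> rep x N Ex Ix Ox
    \<and> E = Ex + Ec \<and> I = Ix + Ic \<and> Os = Ox + Oc \<and> x \<notin> ilabs Ic \<and> x \<notin> ilabs Oc \<and> (\<forall>e z. (x,e,z) \<notin># Ec)
    \<and> nodes x Ex Ix Ox \<inter> nodes r Ec Ic Oc \<subseteq> {x} \<and> (G = CHole \<longrightarrow> x = r)
    \<and> (\<forall>N' Ex' Ix' Ox'. rep x N' Ex' Ix' Ox' \<longrightarrow> nodes x Ex' Ix' Ox' \<inter> nodes r Ec Ic Oc \<subseteq> {x} \<longrightarrow>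
        rep r (fill G N') (Ex'+Ec) (Ix'+Ic) (Ox'+Oc) \<and> rep r (fill (cstrip G) N') (Ex'+Ec) (Ix'+Ic) Ox')"
proof (induction rule: rep.induct)
  case (leaf r X Y)
  then have xr: "x = r" using ilabs_Pair[of r X] ilabs_Pair[of r Y] by (auto simp: nodes_def)
  show ?case
    by (rule exI[of _ CHole], rule exI[of _ "Seq X Y {#}"], rule exI[of _ "{#}"], rule exI[of _ "image_mset (Pair r) X"],
        rule exI[of _ "image_mset (Pair r) Y"], rule exI[of _ "{#}"], rule exI[of _ "{#}"], rule exI[of _ "{#}"])
       (use xr in \<open>auto intro: rep.leaf simp: nodes_def\<close>)
next
  case (child r X Y Z E I Os y N E' I' Os' e)
  let ?S = "Seq X Y (add_mset (e, N) Z)"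
  let ?E = "add_mset (r, e, y) (E + E')"
  show ?case
  proof (cases "x = r")
    case True
    show ?thesis
      by (rule exI[of _ CHole], rule exI[of _ ?S], rule exI[of _ ?E], rule exI[of _ "I + I'"], rule exI[of _ "Os + Os'"],
          rule exI[of _ "{#}"], rule exI[of _ "{#}"], rule exI[of _ "{#}"]) (use True rep.child[OF child.hyps] in \<open>auto simp: nodes_def\<close>)
  next
    case xr: False
    have disj: "nodes y E' I' Os' \<inter> nodes r E I Os = {}" by (rule child.hyps(3))
    from child.prems have "x \<in> nodes r E I Os \<or> x \<in> nodes y E' I' Os'" unfolding nodes_child by blast
    then show ?thesis
    proof
      assume xin: "x \<in> nodes y E' I' Os'"
      then have xnot: "x \<notin> nodes r E I Os" using disj by blast
      from child.IH(2)[OF xin] obtain G' N0 Ex Ix Ox Ec' Ic' Oc' where h: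
        "N = fill G' N0" "rep x N0 Ex Ix Ox" "E' = Ex + Ec'" "I' = Ix + Ic'" "Os' = Ox + Oc'" "x \<notin> ilabs Ic'" "x \<notin> ilabs Oc'"
        "\<forall>e z. (x,e,z) \<notin># Ec'" "nodes x Ex Ix Ox \<inter> nodes y Ec' Ic' Oc' \<subseteq> {x}"
        "\<forall>N' Ex' Ix' Ox'. rep x N' Ex' Ix' Ox' \<longrightarrow> nodes x Ex' Ix' Ox' \<inter> nodes y Ec' Ic' Oc' \<subseteq> {x} \<longrightarrow>
          rep y (fill G' N') (Ex'+Ec') (Ix'+Ic') (Ox'+Oc') \<and> rep y (fill (cstrip G') N') (Ex'+Ec') (Ix'+Ic') Ox'"
        by blast
      have nc: "nodes r (add_mset (r,e,y) (E + Ec')) (I + Ic') (Os + Oc') = nodes r E I Os \<union> nodes y Ec' Ic' Oc'"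
        by (rule nodes_child)
      have nx: "nodes x Ex Ix Ox \<subseteq> nodes y E' I' Os'" using nodes_sub[of x y Ex Ec' Ix Ic' Ox Oc'] xin h by simp
      have ny: "nodes y Ec' Ic' Oc' \<subseteq> nodes y E' I' Os'" using h by (auto simp: nodes_def)
      show ?thesis
      proof (rule exI[of _ "CNode X Y Z e G'"], rule exI[of _ N0], rule exI[of _ Ex], rule exI[of _ Ix], rule exI[of _ Ox],
          rule exI[of _ "add_mset (r,e,y) (E + Ec')"], rule exI[of _ "I + Ic'"], rule exI[of _ "Os + Oc'"], intro conjI allI impI)
        show "?S = fill (CNode X Y Z e G') N0" using h by simp
        show "rep x N0 Ex Ix Ox" by (rule h(2))
        show "?E = Ex + add_mset (r, e, y) (E + Ec')" using h by (simp add: ac_simps)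
        show "I + I' = Ix + (I + Ic')" using h by (simp add: ac_simps)
        show "Os + Os' = Ox + (Os + Oc')" using h by (simp add: ac_simps)
        show "x \<notin> ilabs (I + Ic')" using h xnot by (auto simp: nodes_def)
        show "x \<notin> ilabs (Os + Oc')" using h xnot by (auto simp: nodes_def)
        show "nodes x Ex Ix Ox \<inter> nodes r (add_mset (r, e, y) (E + Ec')) (I + Ic') (Os + Oc') \<subseteq> {x}"
          unfolding nc using nx disj h(9) by blast
        show "x = r" if "CNode X Y Z e G' = CHole" using that by simp
      next
        fix e0 z0
        show "(x, e0, z0) \<notin># add_mset (r, e, y) (E + Ec')"
          using h(8) xr xnot elabs_mem[of x e0 z0 E] by (auto simp: nodes_def)
      next
        fix N' :: "'a seq" and Ex' :: "'a edges" and Ix' Ox' :: "'a ins"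
        assume r': "rep x N' Ex' Ix' Ox'" and d': "nodes x Ex' Ix' Ox' \<inter> nodes r (add_mset (r, e, y) (E + Ec')) (I + Ic') (Os + Oc') \<subseteq> {x}"
        have d'': "nodes x Ex' Ix' Ox' \<inter> nodes y Ec' Ic' Oc' \<subseteq> {x}" using d' unfolding nc by blast
        from h(10) r' d'' have hh: "rep y (fill G' N') (Ex'+Ec') (Ix'+Ic') (Ox'+Oc')" "rep y (fill (cstrip G') N') (Ex'+Ec') (Ix'+Ic') Ox'"
          by blast+
        have nn: "nodes y (Ex'+Ec') (Ix'+Ic') (Ox'+Oc') \<subseteq> nodes x Ex' Ix' Ox' \<union> nodes y Ec' Ic' Oc'"
          by (auto simp: nodes_def)
        have nn2: "nodes y (Ex'+Ec') (Ix'+Ic') Ox' \<subseteq> nodes x Ex' Ix' Ox' \<union> nodes y Ec' Ic' Oc'"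
          by (auto simp: nodes_def)
        have dd: "(nodes x Ex' Ix' Ox' \<union> nodes y Ec' Ic' Oc') \<inter> nodes r E I Os = {}"
          using d' ny disj xnot unfolding nc by blast
        have c1: "rep r (Seq X Y (add_mset (e, fill G' N') Z)) (add_mset (r,e,y) (E + (Ex'+Ec'))) (I + (Ix'+Ic')) (Os + (Ox'+Oc'))"
          by (rule rep.child[OF child.hyps(1) hh(1)]) (use nn dd in blast)
        have c2: "rep r (Seq X {#} (add_mset (e, fill (cstrip G') N') (image_mset (map_prod id strip) Z))) (add_mset (r,e,y) (E + (Ex'+Ec'))) (I + (Ix'+Ic')) ({#} + Ox')"
        proof (rule rep.child[OF rep_strip[OF child.hyps(1), simplified] hh(2)])
          have "nodes r E I {#} \<subseteq> nodes r E I Os" by (auto simp: nodes_def)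
          then show "nodes y (Ex' + Ec') (Ix' + Ic') Ox' \<inter> nodes r E I {#} = {}" using nn2 dd by blast
        qed
        show "rep r (fill (CNode X Y Z e G') N') (Ex' + add_mset (r, e, y) (E + Ec')) (Ix' + (I + Ic')) (Ox' + (Os + Oc'))"
          using c1 by (simp add: ac_simps)
        show "rep r (fill (cstrip (CNode X Y Z e G')) N') (Ex' + add_mset (r, e, y) (E + Ec')) (Ix' + (I + Ic')) Ox'"
          using c2 by (simp add: ac_simps)
      qed
    next
      assume xin: "x \<in> nodes r E I Os"
      then have xnot: "x \<notin> nodes y E' I' Os'" using disj by blast
      from child.IH(1)[OF xin] obtain G1 N0 Ex Ix Ox Ec1 Ic1 Oc1 where h:
        "Seq X Y Z = fill G1 N0" "rep x N0 Ex Ix Ox" "E = Ex + Ec1" "I = Ix + Ic1" "Os = Ox + Oc1" "x \<notin> ilabs Ic1" "x \<notin> ilabs Oc1"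
        "\<forall>e z. (x,e,z) \<notin># Ec1" "nodes x Ex Ix Ox \<inter> nodes r Ec1 Ic1 Oc1 \<subseteq> {x}" "G1 = CHole \<longrightarrow> x = r"
        "\<forall>N' Ex' Ix' Ox'. rep x N' Ex' Ix' Ox' \<longrightarrow> nodes x Ex' Ix' Ox' \<inter> nodes r Ec1 Ic1 Oc1 \<subseteq> {x} \<longrightarrow>
          rep r (fill G1 N') (Ex'+Ec1) (Ix'+Ic1) (Ox'+Oc1) \<and> rep r (fill (cstrip G1) N') (Ex'+Ec1) (Ix'+Ic1) Ox'"
        by blast
      obtain X1 Y1 Z1 e1 G1' where G1: "G1 = CNode X1 Y1 Z1 e1 G1'" using h(10) xr by (cases G1) auto
      have eqs: "X1 = X" "Y1 = Y" "Z = Z1 + {#(e1, fill G1' N0)#}" using h(1) G1 by auto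
      have nc: "nodes r (add_mset (r,e,y) (Ec1 + E')) (Ic1 + I') (Oc1 + Os') = nodes r Ec1 Ic1 Oc1 \<union> nodes y E' I' Os'"
        by (rule nodes_child)
      have nx: "nodes x Ex Ix Ox \<subseteq> nodes r E I Os" using nodes_sub[of x r Ex Ec1 Ix Ic1 Ox Oc1] xin h by simp
      have n1: "nodes r Ec1 Ic1 Oc1 \<subseteq> nodes r E I Os" using h by (auto simp: nodes_def)
      show ?thesis
      proof (rule exI[of _ "CNode X Y (add_mset (e,N) Z1) e1 G1'"], rule exI[of _ N0], rule exI[of _ Ex], rule exI[of _ Ix], rule exI[of _ Ox],
          rule exI[of _ "add_mset (r,e,y) (Ec1 + E')"], rule exI[of _ "Ic1 + I'"], rule exI[of _ "Oc1 + Os'"], intro conjI allI impI)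
        show "?S = fill (CNode X Y (add_mset (e,N) Z1) e1 G1') N0" using eqs by simp
        show "rep x N0 Ex Ix Ox" by (rule h(2))
        show "?E = Ex + add_mset (r, e, y) (Ec1 + E')" using h by (simp add: ac_simps)
        show "I + I' = Ix + (Ic1 + I')" using h by (simp add: ac_simps)
        show "Os + Os' = Ox + (Oc1 + Os')" using h by (simp add: ac_simps)
        show "x \<notin> ilabs (Ic1 + I')" using h xnot by (auto simp: nodes_def)
        show "x \<notin> ilabs (Oc1 + Os')" using h xnot by (auto simp: nodes_def)
        show "nodes x Ex Ix Ox \<inter> nodes r (add_mset (r, e, y) (Ec1 + E')) (Ic1 + I') (Oc1 + Os') \<subseteq> {x}"
          unfolding nc using nx disj h(9) by blast
        show "x = r" if "CNode X Y (add_mset (e,N) Z1) e1 G1' = CHole" using that by simp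
      next
        fix e0 z0
        show "(x, e0, z0) \<notin># add_mset (r, e, y) (Ec1 + E')"
          using h(8) xr xnot elabs_mem[of x e0 z0 E'] by (auto simp: nodes_def)
      next
        fix N' :: "'a seq" and Ex' :: "'a edges" and Ix' Ox' :: "'a ins"
        assume r': "rep x N' Ex' Ix' Ox'" and d': "nodes x Ex' Ix' Ox' \<inter> nodes r (add_mset (r, e, y) (Ec1 + E')) (Ic1 + I') (Oc1 + Os') \<subseteq> {x}"
        have d'': "nodes x Ex' Ix' Ox' \<inter> nodes r Ec1 Ic1 Oc1 \<subseteq> {x}" using d' unfolding nc by blast
        from h(11) r' d'' have hh: "rep r (fill G1 N') (Ex'+Ec1) (Ix'+Ic1) (Ox'+Oc1)" "rep r (fill (cstrip G1) N') (Ex'+Ec1) (Ix'+Ic1) Ox'"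
          by blast+
        have nn: "nodes r (Ex'+Ec1) (Ix'+Ic1) (Ox'+Oc1) \<subseteq> nodes x Ex' Ix' Ox' \<union> nodes r Ec1 Ic1 Oc1"
          by (auto simp: nodes_def)
        have nn2: "nodes r (Ex'+Ec1) (Ix'+Ic1) Ox' \<subseteq> nodes x Ex' Ix' Ox' \<union> nodes r Ec1 Ic1 Oc1"
          by (auto simp: nodes_def)
        have dd: "nodes y E' I' Os' \<inter> (nodes x Ex' Ix' Ox' \<union> nodes r Ec1 Ic1 Oc1) = {}"
          using d' n1 disj xnot unfolding nc by blast
        have c1: "rep r (Seq X Y (add_mset (e, N) (add_mset (e1, fill G1' N') Z1))) (add_mset (r,e,y) ((Ex'+Ec1) + E')) ((Ix'+Ic1) + I') ((Ox'+Oc1) + Os')"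
          by (rule rep.child[OF hh(1)[unfolded G1 eqs(1,2), simplified] child.hyps(2)]) (use nn dd in blast)
        have c2: "rep r (Seq X {#} (add_mset (e, strip N) (add_mset (e1, fill (cstrip G1') N') (image_mset (map_prod id strip) Z1))))
           (add_mset (r,e,y) ((Ex'+Ec1) + E')) ((Ix'+Ic1) + I') (Ox' + {#})"
        proof (rule rep.child[OF hh(2)[unfolded G1 eqs(1,2), simplified] rep_strip[OF child.hyps(2)]])
          have "nodes y E' I' {#} \<subseteq> nodes y E' I' Os'" by (auto simp: nodes_def)
          then show "nodes y E' I' {#} \<inter> nodes r (Ex' + Ec1) (Ix' + Ic1) Ox' = {}" using nn2 dd by blast
        qed
        show "rep r (fill (CNode X Y (add_mset (e, N) Z1) e1 G1') N') (Ex' + add_mset (r, e, y) (Ec1 + E')) (Ix' + (Ic1 + I')) (Ox' + (Oc1 + Os'))"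
          using c1 by (simp add: ac_simps add_mset_commute)
        show "rep r (fill (cstrip (CNode X Y (add_mset (e, N) Z1) e1 G1')) N') (Ex' + add_mset (r, e, y) (Ec1 + E')) (Ix' + (Ic1 + I')) Ox'"
          using c2 by (simp add: ac_simps add_mset_commute)
      qed
    qed
  qed
qed

lemma mem_node: "(x,f) \<in># image_mset (Pair x) X + J \<Longrightarrow> x \<notin> ilabs J \<Longrightarrow> f \<in># X"
  by (force simp: ilabs_def)

lemma rep_root':
  assumes "rep x (Seq X Y Z) Ek (image_mset (Pair x) X + I1) (image_mset (Pair x) Y + O1)"
  shows "rep x (Seq X' Y' Z) Ek (image_mset (Pair x) X' + I1) (image_mset (Pair x) Y' + O1)"
  using rep_root[OF assms refl] by auto

lemma node_view:
  fixes S :: "'a seq"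
  assumes "rep r S E I Os" "x \<in> nodes r E I Os"
  obtains G X Y Z Ek I1 O1 Ec Ic Oc where
    "S = fill G (Seq X Y Z)" "E = Ek + Ec" "I = image_mset (Pair x) X + (I1 + Ic)" "Os = image_mset (Pair x) Y + (O1 + Oc)"
    "x \<notin> ilabs (I1 + Ic)" "x \<notin> ilabs (O1 + Oc)"
    "\<And>X' Y'. rep r (fill G (Seq X' Y' Z)) E (image_mset (Pair x) X' + (I1 + Ic)) (image_mset (Pair x) Y' + (O1 + Oc))"
    "\<And>X' a. rep r (fill (cstrip G) (Seq X' {#a#} (image_mset (map_prod id strip) Z))) E (image_mset (Pair x) X' + (I1 + Ic)) {#(x,a)#}"
    "\<And>y a Xn Yn X' Y'. y \<notin> nodes r E I Os \<Longrightarrow> rep r (fill G (Seq X' Y' (add_mset (a, Seq Xn Yn {#}) Z))) (add_mset (x,a,y) E)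
        (image_mset (Pair x) X' + image_mset (Pair y) Xn + (I1 + Ic)) (image_mset (Pair x) Y' + image_mset (Pair y) Yn + (O1 + Oc))"
    "\<And>e z. (x,e,z) \<in># E \<Longrightarrow> \<exists>Z0 Xz Yz Zz Iz Oz. Z = add_mset (e, Seq Xz Yz Zz) Z0
        \<and> I = image_mset (Pair x) X + image_mset (Pair z) Xz + Iz \<and> Os = image_mset (Pair x) Y + image_mset (Pair z) Yz + Oz
        \<and> (\<forall>X' Y' Xz' Yz'. rep r (fill G (Seq X' Y' (add_mset (e, Seq Xz' Yz' Zz) Z0))) E
              (image_mset (Pair x) X' + image_mset (Pair z) Xz' + Iz) (image_mset (Pair x) Y' + image_mset (Pair z) Yz' + Oz))"
proof -
  from rep_locate[OF assms] obtain G N Ek Ix Ox Ec Ic Oc where h: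
    "S = fill G N" "rep x N Ek Ix Ox" "E = Ek + Ec" "I = Ix + Ic" "Os = Ox + Oc" "x \<notin> ilabs Ic" "x \<notin> ilabs Oc"
    "\<forall>e z. (x,e,z) \<notin># Ec" "nodes x Ek Ix Ox \<inter> nodes r Ec Ic Oc \<subseteq> {x}"
    "\<forall>N' Ek' Ix' Ox'. rep x N' Ek' Ix' Ox' \<longrightarrow> nodes x Ek' Ix' Ox' \<inter> nodes r Ec Ic Oc \<subseteq> {x} \<longrightarrow>
        rep r (fill G N') (Ek'+Ec) (Ix'+Ic) (Ox'+Oc) \<and> rep r (fill (cstrip G) N') (Ek'+Ec) (Ix'+Ic) Ox'"
    by blast
  obtain X Y Z where N: "N = Seq X Y Z" by (cases N)
  from rep_root[OF h(2) N] obtain I1 O1 where g: "Ix = image_mset (Pair x) X + I1" "Ox = image_mset (Pair x) Y + O1"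
    "x \<notin> ilabs I1" "x \<notin> ilabs O1" "\<forall>X' Y'. rep x (Seq X' Y' Z) Ek (image_mset (Pair x) X' + I1) (image_mset (Pair x) Y' + O1)"
    by blast
  have ctx: "nodes r Ec Ic Oc \<subseteq> nodes r E I Os" using h by (auto simp: nodes_def)
  have nx: "nodes x Ek Ix Ox \<subseteq> nodes r E I Os" using nodes_sub[of x r Ek Ec Ix Ic Ox Oc] assms(2) h by simp
  have repl: "rep r (fill G N') (Ek'+Ec) (Ix'+Ic) (Ox'+Oc) \<and> rep r (fill (cstrip G) N') (Ek'+Ec) (Ix'+Ic) Ox'"
    if "rep x N' Ek' Ix' Ox'" "nodes x Ek' Ix' Ox' \<subseteq> nodes x Ek I1 O1 \<union> (- nodes r E I Os)" for N' Ek' Ix' Ox'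
  proof -
    have "nodes x Ek I1 O1 = nodes x Ek Ix Ox" using g by simp
    then have "nodes x Ek' Ix' Ox' \<inter> nodes r Ec Ic Oc \<subseteq> {x}" using that(2) h(9) ctx by blast
    then show ?thesis using h(10) that(1) by blast
  qed
  show thesis
  proof (rule that[of G X Y Z Ek Ec I1 Ic O1 Oc])
    show "S = fill G (Seq X Y Z)" using h N by simp
    show "E = Ek + Ec" by (rule h(3))
    show "I = image_mset (Pair x) X + (I1 + Ic)" using h g by simp
    show "Os = image_mset (Pair x) Y + (O1 + Oc)" using h g by simp
    show "x \<notin> ilabs (I1 + Ic)" "x \<notin> ilabs (O1 + Oc)" using h g by auto
  next
    fix X' Y'
    have "rep r (fill G (Seq X' Y' Z)) (Ek+Ec) ((image_mset (Pair x) X' + I1)+Ic) ((image_mset (Pair x) Y' + O1)+Oc)"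
      using repl[OF g(5)[rule_format, of X' Y']] by simp
    then show "rep r (fill G (Seq X' Y' Z)) E (image_mset (Pair x) X' + (I1 + Ic)) (image_mset (Pair x) Y' + (O1 + Oc))"
      using h by (simp add: ac_simps)
  next
    fix X' a
    have s: "rep x (Seq X {#} (image_mset (map_prod id strip) Z)) Ek (image_mset (Pair x) X + I1) (image_mset (Pair x) {#} + {#})"
      using rep_strip[OF g(5)[rule_format, of X Y]] by simp
    have "rep x (Seq X' {#a#} (image_mset (map_prod id strip) Z)) Ek (image_mset (Pair x) X' + I1) (image_mset (Pair x) {#a#} + {#})"
      by (rule rep_root'[OF s])
    moreover have "nodes x Ek (image_mset (Pair x) X' + I1) (image_mset (Pair x) {#a#} + {#}) \<subseteq> nodes x Ek I1 O1 \<union> (- nodes r E I Os)"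
      using ilabs_Pair[of x X'] by (auto simp: nodes_def)
    ultimately have "rep r (fill (cstrip G) (Seq X' {#a#} (image_mset (map_prod id strip) Z))) (Ek+Ec) ((image_mset (Pair x) X' + I1)+Ic) (image_mset (Pair x) {#a#} + {#})"
      using repl by blast
    then show "rep r (fill (cstrip G) (Seq X' {#a#} (image_mset (map_prod id strip) Z))) E (image_mset (Pair x) X' + (I1 + Ic)) {#(x,a)#}"
      using h by (simp add: ac_simps)
  next
    fix y a Xn Yn X' Y'
    assume y: "y \<notin> nodes r E I Os"
    have c: "rep x (Seq X' Y' (add_mset (a, Seq Xn Yn {#}) Z)) (add_mset (x,a,y) (Ek + {#})) ((image_mset (Pair x) X' + I1) + image_mset (Pair y) Xn) ((image_mset (Pair x) Y' + O1) + image_mset (Pair y) Yn)"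
    proof (rule rep.child[OF g(5)[rule_format] rep.leaf])
      have "nodes y {#} (image_mset (Pair y) Xn) (image_mset (Pair y) Yn) \<subseteq> {y}"
        using ilabs_Pair[of y Xn] ilabs_Pair[of y Yn] by (auto simp: nodes_def)
      moreover have "nodes x Ek (image_mset (Pair x) X' + I1) (image_mset (Pair x) Y' + O1) \<subseteq> nodes r E I Os"
        using nx g by simp
      ultimately show "nodes y {#} (image_mset (Pair y) Xn) (image_mset (Pair y) Yn) \<inter> nodes x Ek (image_mset (Pair x) X' + I1) (image_mset (Pair x) Y' + O1) = {}"
        using y by blast
    qed
    have "nodes x (add_mset (x,a,y) (Ek + {#})) ((image_mset (Pair x) X' + I1) + image_mset (Pair y) Xn) ((image_mset (Pair x) Y' + O1) + image_mset (Pair y) Yn)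
       \<subseteq> nodes x Ek I1 O1 \<union> (- nodes r E I Os)"
      using y ilabs_Pair[of y Xn] ilabs_Pair[of y Yn] ilabs_Pair[of x X'] ilabs_Pair[of x Y'] by (auto simp: nodes_def)
    from repl[OF c this] show "rep r (fill G (Seq X' Y' (add_mset (a, Seq Xn Yn {#}) Z))) (add_mset (x,a,y) E)
        (image_mset (Pair x) X' + image_mset (Pair y) Xn + (I1 + Ic)) (image_mset (Pair x) Y' + image_mset (Pair y) Yn + (O1 + Oc))"
      using h by (simp add: ac_simps)
  next
    fix e z assume ez: "(x,e,z) \<in># E"
    then have "(x,e,z) \<in># Ek" using h by auto
    from rep_peel[OF g(5)[rule_format, of X Y] refl this] obtain N0 Z0 E0 I0 Os0 Ez Iz Osz where p:
      "Z = add_mset (e,N0) Z0" "rep x (Seq X Y Z0) E0 I0 Os0" "rep z N0 Ez Iz Osz" "nodes z Ez Iz Osz \<inter> nodes x E0 I0 Os0 = {}"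
      "Ek = add_mset (x,e,z) (E0 + Ez)" "image_mset (Pair x) X + I1 = I0 + Iz" "image_mset (Pair x) Y + O1 = Os0 + Osz"
      by blast
    obtain Xz Yz Zz where N0: "N0 = Seq Xz Yz Zz" by (cases N0)
    from rep_root[OF p(3) N0] obtain Iz1 Oz1 where q: "Iz = image_mset (Pair z) Xz + Iz1" "Osz = image_mset (Pair z) Yz + Oz1"
      "\<forall>X' Y'. rep z (Seq X' Y' Zz) Ez (image_mset (Pair z) X' + Iz1) (image_mset (Pair z) Y' + Oz1)" by blast
    from rep_root[OF p(2) refl] obtain I01 O01 where q0: "I0 = image_mset (Pair x) X + I01" "Os0 = image_mset (Pair x) Y + O01"
      "\<forall>X' Y'. rep x (Seq X' Y' Z0) E0 (image_mset (Pair x) X' + I01) (image_mset (Pair x) Y' + O01)" by blast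
    have I1eq: "I1 = I01 + Iz" using p(6) q0(1) by (simp add: add.assoc)
    have O1eq: "O1 = O01 + Osz" using p(7) q0(2) by (simp add: add.assoc)
    show "\<exists>Z0 Xz Yz Zz Iz Oz. Z = add_mset (e, Seq Xz Yz Zz) Z0
        \<and> I = image_mset (Pair x) X + image_mset (Pair z) Xz + Iz \<and> Os = image_mset (Pair x) Y + image_mset (Pair z) Yz + Oz
        \<and> (\<forall>X' Y' Xz' Yz'. rep r (fill G (Seq X' Y' (add_mset (e, Seq Xz' Yz' Zz) Z0))) E
              (image_mset (Pair x) X' + image_mset (Pair z) Xz' + Iz) (image_mset (Pair x) Y' + image_mset (Pair z) Yz' + Oz))"
    proof (rule exI[of _ Z0], rule exI[of _ Xz], rule exI[of _ Yz], rule exI[of _ Zz], rule exI[of _ "I01 + Iz1 + Ic"],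
        rule exI[of _ "O01 + Oz1 + Oc"], intro conjI allI)
      show "Z = add_mset (e, Seq Xz Yz Zz) Z0" using p N0 by simp
      show "I = image_mset (Pair x) X + image_mset (Pair z) Xz + (I01 + Iz1 + Ic)" using h g I1eq q by (simp add: ac_simps)
      show "Os = image_mset (Pair x) Y + image_mset (Pair z) Yz + (O01 + Oz1 + Oc)" using h g O1eq q by (simp add: ac_simps)
      fix X' Y' Xz' Yz'
      have c: "rep x (Seq X' Y' (add_mset (e, Seq Xz' Yz' Zz) Z0)) (add_mset (x,e,z) (E0 + Ez))
         ((image_mset (Pair x) X' + I01) + (image_mset (Pair z) Xz' + Iz1)) ((image_mset (Pair x) Y' + O01) + (image_mset (Pair z) Yz' + Oz1))"
        by (rule rep.child[OF q0(3)[rule_format] q(3)[rule_format]]) (use p(4) q q0 in simp)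
      have "nodes x (add_mset (x,e,z) (E0 + Ez)) ((image_mset (Pair x) X' + I01) + (image_mset (Pair z) Xz' + Iz1)) ((image_mset (Pair x) Y' + O01) + (image_mset (Pair z) Yz' + Oz1))
         \<subseteq> nodes x Ek I1 O1 \<union> (- nodes r E I Os)"
        using p(5) I1eq O1eq q ilabs_Pair[of z Xz'] ilabs_Pair[of z Yz'] ilabs_Pair[of x X'] ilabs_Pair[of x Y']
          ilabs_Pair[of z Xz] ilabs_Pair[of z Yz] by (auto simp: nodes_def)
      from repl[OF c this] show "rep r (fill G (Seq X' Y' (add_mset (e, Seq Xz' Yz' Zz) Z0))) E
              (image_mset (Pair x) X' + image_mset (Pair z) Xz' + (I01 + Iz1 + Ic)) (image_mset (Pair x) Y' + image_mset (Pair z) Yz' + (O01 + Oz1 + Oc))"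
        using h p(5) by (simp add: ac_simps)
    qed
  qed
qed

lemma rep_nested: "rep r S E I {#u#} \<Longrightarrow> nested S"
  using rep_outs by (fastforce simp: nested_def)

lemma single_split: "A + B = {#v#} \<Longrightarrow> v \<in># A \<Longrightarrow> A = {#v#} \<and> B = {#}"
  by (auto simp: union_is_single)

lemma pair_single: "image_mset (Pair x) Y = {#(x,f)#} \<Longrightarrow> Y = {#f#}"
  by (induct Y) auto

lemma out_node:
  assumes "{#(x,f)#} = image_mset (Pair x) Y + R" "x \<notin> ilabs R"
  shows "Y = {#f#} \<and> R = {#}"
proof -
  have "Y \<noteq> {#}" using assms by (auto simp: ilabs_def)
  then obtain g where "g \<in># Y" by blast
  then have "(x,g) \<in># image_mset (Pair x) Y" by auto
  then have "(x,g) \<in># {#(x,f)#}" using assms by simp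
  then have "(x,f) \<in># image_mset (Pair x) Y" using \<open>(x,g) \<in># image_mset (Pair x) Y\<close> by simp
  from single_split[OF assms(1)[symmetric] this] show ?thesis using pair_single[of x Y f] by auto
qed

lemma rep_io: "rep 0 (io a e) {#} {#(0,a)#} {#(0,e)#}"
  unfolding io_def using rep.leaf[of 0 "{#a#}" "{#e#}"] by simp

lemma fresh_nodes: "finite F \<Longrightarrow> \<exists>y. y \<notin> F \<and> y \<notin> nodes r E I Os"
  using ex_fresh[of "F \<union> nodes r E I Os"] by (auto simp: nodes_def)

lemma trans: "L E I u \<Longrightarrow> rep r S E I {#u#} \<Longrightarrow> nderiv S"
proof (induction arbitrary: r S rule: L.induct)
  case (Init E x p K)
  have xin: "x \<in> nodes r E (add_mset (x, Atom p) K) {#(x, Atom p)#}" by (simp add: nodes_def)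
  obtain G X Y Z I1 O1 Ic Oc where v: "S = fill G (Seq X Y Z)" "add_mset (x, Atom p) K = image_mset (Pair x) X + (I1 + Ic)"
    "{#(x, Atom p)#} = image_mset (Pair x) Y + (O1 + Oc)" "x \<notin> ilabs (I1 + Ic)"
    and vO: "x \<notin> ilabs (O1 + Oc)"
    by (rule node_view[OF Init.prems xin]) (rule that; assumption)
  have "Atom p \<in># X" by (rule mem_node[OF _ v(4)]) (simp add: v(2)[symmetric])
  then obtain X0 where X: "X = add_mset (Atom p) X0" by (metis insert_DiffM)
  have Y: "Y = {#Atom p#}" using out_node[OF v(3) vO] by simp
  show ?case using nderiv.init[of G X0 p "{#}" Z, simplified] rep_nested[OF Init.prems] v(1) X Y by simp
next
  case (BotL E x K u)
  have xin: "x \<in> nodes r E (add_mset (x, Bot) K) {#u#}" by (simp add: nodes_def)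
  obtain G X Y Z I1 Ic where v: "S = fill G (Seq X Y Z)" "add_mset (x, Bot) K = image_mset (Pair x) X + (I1 + Ic)"
    "x \<notin> ilabs (I1 + Ic)"
    by (rule node_view[OF BotL.prems xin]) (rule that; assumption)
  have "Bot \<in># X" by (rule mem_node[OF _ v(3)]) (simp add: v(2)[symmetric])
  then obtain X0 where X: "X = add_mset Bot X0" by (metis insert_DiffM)
  show ?case using nderiv.botL[of G X0 Y Z, simplified] rep_nested[OF BotL.prems] v(1) X by simp
next
  case (AndL E x a b K u)
  have xin: "x \<in> nodes r E (add_mset (x, And a b) K) {#u#}" by (simp add: nodes_def)
  obtain G X Y Z I1 O1 Ic Oc where v: "S = fill G (Seq X Y Z)" "add_mset (x, And a b) K = image_mset (Pair x) X + (I1 + Ic)"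
    "{#u#} = image_mset (Pair x) Y + (O1 + Oc)" "x \<notin> ilabs (I1 + Ic)"
    "\<And>X' Y'. rep r (fill G (Seq X' Y' Z)) E (image_mset (Pair x) X' + (I1 + Ic)) (image_mset (Pair x) Y' + (O1 + Oc))"
    by (rule node_view[OF AndL.prems xin]) (rule that; assumption)
  have "And a b \<in># X" by (rule mem_node[OF _ v(4)]) (simp add: v(2)[symmetric])
  then obtain X0 where X: "X = add_mset (And a b) X0" by (metis insert_DiffM)
  have K: "K = image_mset (Pair x) X0 + (I1 + Ic)" using v(2) X by simp
  have r': "rep r (fill G (Seq (add_mset a (add_mset b X0)) Y Z)) E (add_mset (x,a) (add_mset (x,b) K)) {#u#}"
    using v(5)[of "add_mset a (add_mset b X0)" Y] K v(3) by simp
  show ?case using nderiv.andL[of G X0 a b Y Z, simplified] rep_nested[OF AndL.prems] rep_nested[OF r'] AndL.IH[OF r'] v(1) X by simp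
next
  case (AndR E I x a b)
  have xin: "x \<in> nodes r E I {#(x, And a b)#}" by (simp add: nodes_def)
  obtain G X Y Z I1 O1 Ic Oc where v: "S = fill G (Seq X Y Z)" "I = image_mset (Pair x) X + (I1 + Ic)"
    "{#(x, And a b)#} = image_mset (Pair x) Y + (O1 + Oc)"
    "\<And>X' Y'. rep r (fill G (Seq X' Y' Z)) E (image_mset (Pair x) X' + (I1 + Ic)) (image_mset (Pair x) Y' + (O1 + Oc))"
    and vO: "x \<notin> ilabs (O1 + Oc)"
    by (rule node_view[OF AndR.prems xin]) (rule that; assumption)
  have Y: "Y = {#And a b#}" "O1 + Oc = {#}" using out_node[OF v(3) vO] by auto
  have r1: "rep r (fill G (Seq X {#a#} Z)) E I {#(x,a)#}" using v(4)[of X "{#a#}"] v(2) Y by simp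
  have r2: "rep r (fill G (Seq X {#b#} Z)) E I {#(x,b)#}" using v(4)[of X "{#b#}"] v(2) Y by simp
  show ?case using nderiv.andR[of G X "{#}" a b Z, simplified] rep_nested[OF AndR.prems] rep_nested[OF r1] rep_nested[OF r2]
      AndR.IH(1)[OF r1] AndR.IH(2)[OF r2] v(1) Y by simp
next
  case (OrL E x a K u b)
  have xin: "x \<in> nodes r E (add_mset (x, Or a b) K) {#u#}" by (simp add: nodes_def)
  obtain G X Y Z I1 O1 Ic Oc where v: "S = fill G (Seq X Y Z)" "add_mset (x, Or a b) K = image_mset (Pair x) X + (I1 + Ic)"
    "{#u#} = image_mset (Pair x) Y + (O1 + Oc)" "x \<notin> ilabs (I1 + Ic)"
    "\<And>X' Y'. rep r (fill G (Seq X' Y' Z)) E (image_mset (Pair x) X' + (I1 + Ic)) (image_mset (Pair x) Y' + (O1 + Oc))"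
    by (rule node_view[OF OrL.prems xin]) (rule that; assumption)
  have "Or a b \<in># X" by (rule mem_node[OF _ v(4)]) (simp add: v(2)[symmetric])
  then obtain X0 where X: "X = add_mset (Or a b) X0" by (metis insert_DiffM)
  have K: "K = image_mset (Pair x) X0 + (I1 + Ic)" using v(2) X by simp
  have r1: "rep r (fill G (Seq (add_mset a X0) Y Z)) E (add_mset (x,a) K) {#u#}"
    using v(5)[of "add_mset a X0" Y] K v(3) by simp
  have r2: "rep r (fill G (Seq (add_mset b X0) Y Z)) E (add_mset (x,b) K) {#u#}"
    using v(5)[of "add_mset b X0" Y] K v(3) by simp
  show ?case using nderiv.orL[of G X0 a b Y Z, simplified] rep_nested[OF OrL.prems] rep_nested[OF r1] rep_nested[OF r2]
      OrL.IH(1)[OF r1] OrL.IH(2)[OF r2] v(1) X by simp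
next
  case (OrR1 E I x a b)
  have xin: "x \<in> nodes r E I {#(x, Or a b)#}" by (simp add: nodes_def)
  obtain G X Y Z I1 O1 Ic Oc where v: "S = fill G (Seq X Y Z)" "I = image_mset (Pair x) X + (I1 + Ic)"
    "{#(x, Or a b)#} = image_mset (Pair x) Y + (O1 + Oc)"
    "\<And>X' Y'. rep r (fill G (Seq X' Y' Z)) E (image_mset (Pair x) X' + (I1 + Ic)) (image_mset (Pair x) Y' + (O1 + Oc))"
    and vO: "x \<notin> ilabs (O1 + Oc)"
    by (rule node_view[OF OrR1.prems xin]) (rule that; assumption)
  have Y: "Y = {#Or a b#}" "O1 + Oc = {#}" using out_node[OF v(3) vO] by auto
  have r1: "rep r (fill G (Seq X {#a#} Z)) E I {#(x,a)#}" using v(4)[of X "{#a#}"] v(2) Y by simp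
  show ?case using nderiv.orR1[of G X "{#}" a b Z, simplified] rep_nested[OF OrR1.prems] rep_nested[OF r1]
      OrR1.IH[OF r1] v(1) Y by simp
next
  case (OrR2 E I x b a)
  have xin: "x \<in> nodes r E I {#(x, Or a b)#}" by (simp add: nodes_def)
  obtain G X Y Z I1 O1 Ic Oc where v: "S = fill G (Seq X Y Z)" "I = image_mset (Pair x) X + (I1 + Ic)"
    "{#(x, Or a b)#} = image_mset (Pair x) Y + (O1 + Oc)"
    "\<And>X' Y'. rep r (fill G (Seq X' Y' Z)) E (image_mset (Pair x) X' + (I1 + Ic)) (image_mset (Pair x) Y' + (O1 + Oc))"
    and vO: "x \<notin> ilabs (O1 + Oc)"
    by (rule node_view[OF OrR2.prems xin]) (rule that; assumption)
  have Y: "Y = {#Or a b#}" "O1 + Oc = {#}" using out_node[OF v(3) vO] by auto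
  have r1: "rep r (fill G (Seq X {#b#} Z)) E I {#(x,b)#}" using v(4)[of X "{#b#}"] v(2) Y by simp
  show ?case using nderiv.orR2[of G X "{#}" a b Z, simplified] rep_nested[OF OrR2.prems] rep_nested[OF r1]
      OrR2.IH[OF r1] v(1) Y by simp
next
  case (ImpL E x a b K u)
  have xin: "x \<in> nodes r E (add_mset (x, Imp a b) K) {#u#}" by (simp add: nodes_def)
  obtain G X Y Z I1 O1 Ic Oc where v: "S = fill G (Seq X Y Z)" "add_mset (x, Imp a b) K = image_mset (Pair x) X + (I1 + Ic)"
    "{#u#} = image_mset (Pair x) Y + (O1 + Oc)" "x \<notin> ilabs (I1 + Ic)"
    "\<And>X' Y'. rep r (fill G (Seq X' Y' Z)) E (image_mset (Pair x) X' + (I1 + Ic)) (image_mset (Pair x) Y' + (O1 + Oc))"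
    "\<And>X' a. rep r (fill (cstrip G) (Seq X' {#a#} (image_mset (map_prod id strip) Z))) E (image_mset (Pair x) X' + (I1 + Ic)) {#(x,a)#}"
    by (rule node_view[OF ImpL.prems xin]) (rule that; assumption)
  have "Imp a b \<in># X" by (rule mem_node[OF _ v(4)]) (simp add: v(2)[symmetric])
  then obtain X0 where X: "X = add_mset (Imp a b) X0" by (metis insert_DiffM)
  have K: "K = image_mset (Pair x) X0 + (I1 + Ic)" using v(2) X by simp
  have r1: "rep r (fill (cstrip G) (Seq (add_mset (Imp a b) X0) {#a#} (image_mset (map_prod id strip) Z))) E (add_mset (x, Imp a b) K) {#(x,a)#}"
    using v(6)[of "add_mset (Imp a b) X0" a] K by simp
  have r2: "rep r (fill G (Seq (add_mset b X0) Y Z)) E (add_mset (x,b) K) {#u#}"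
    using v(5)[of "add_mset b X0" Y] K v(3) by simp
  show ?case using nderiv.impL[of G X0 a b Y Z, simplified] rep_nested[OF ImpL.prems] rep_nested[OF r1] rep_nested[OF r2]
      ImpL.IH(1)[OF r1] ImpL.IH(2)[OF r2] v(1) X by simp
next
  case (ImpR E x a I b)
  have xin: "x \<in> nodes r E I {#(x, Imp a b)#}" by (simp add: nodes_def)
  obtain G X Y Z I1 O1 Ic Oc where v: "S = fill G (Seq X Y Z)" "I = image_mset (Pair x) X + (I1 + Ic)"
    "{#(x, Imp a b)#} = image_mset (Pair x) Y + (O1 + Oc)"
    "\<And>X' Y'. rep r (fill G (Seq X' Y' Z)) E (image_mset (Pair x) X' + (I1 + Ic)) (image_mset (Pair x) Y' + (O1 + Oc))"
    and vO: "x \<notin> ilabs (O1 + Oc)"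
    by (rule node_view[OF ImpR.prems xin]) (rule that; assumption)
  have Y: "Y = {#Imp a b#}" "O1 + Oc = {#}" using out_node[OF v(3) vO] by auto
  have r1: "rep r (fill G (Seq (add_mset a X) {#b#} Z)) E (add_mset (x,a) I) {#(x,b)#}" using v(4)[of "add_mset a X" "{#b#}"] v(2) Y by simp
  show ?case using nderiv.impR[of G X "{#}" a b Z, simplified] rep_nested[OF ImpR.prems] rep_nested[OF r1]
      ImpR.IH[OF r1] v(1) Y by simp
next
  case (BoxL x e z E a b K u)
  have xin: "x \<in> nodes r E (add_mset (x, BoxArr a b) K) {#u#}" by (simp add: nodes_def)
  obtain G X Y Z I1 O1 Ic Oc where v: "S = fill G (Seq X Y Z)" "add_mset (x, BoxArr a b) K = image_mset (Pair x) X + (I1 + Ic)"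
    "{#u#} = image_mset (Pair x) Y + (O1 + Oc)" "x \<notin> ilabs (I1 + Ic)"
    "\<And>e z. (x,e,z) \<in># E \<Longrightarrow> \<exists>Z0 Xz Yz Zz Iz Oz. Z = add_mset (e, Seq Xz Yz Zz) Z0
        \<and> add_mset (x, BoxArr a b) K = image_mset (Pair x) X + image_mset (Pair z) Xz + Iz \<and> {#u#} = image_mset (Pair x) Y + image_mset (Pair z) Yz + Oz
        \<and> (\<forall>X' Y' Xz' Yz'. rep r (fill G (Seq X' Y' (add_mset (e, Seq Xz' Yz' Zz) Z0))) E
              (image_mset (Pair x) X' + image_mset (Pair z) Xz' + Iz) (image_mset (Pair x) Y' + image_mset (Pair z) Yz' + Oz))"
    by (rule node_view[OF BoxL.prems xin]) (rule that; assumption)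
  have "BoxArr a b \<in># X" by (rule mem_node[OF _ v(4)]) (simp add: v(2)[symmetric])
  then obtain X0 where X: "X = add_mset (BoxArr a b) X0" by (metis insert_DiffM)
  from v(5)[OF BoxL.hyps(1)] obtain Z0 Xz Yz Zz Iz Oz where c: "Z = add_mset (e, Seq Xz Yz Zz) Z0"
    "add_mset (x, BoxArr a b) K = image_mset (Pair x) X + image_mset (Pair z) Xz + Iz" "{#u#} = image_mset (Pair x) Y + image_mset (Pair z) Yz + Oz"
    "\<And>X' Y' Xz' Yz'. rep r (fill G (Seq X' Y' (add_mset (e, Seq Xz' Yz' Zz) Z0))) E
              (image_mset (Pair x) X' + image_mset (Pair z) Xz' + Iz) (image_mset (Pair x) Y' + image_mset (Pair z) Yz' + Oz)"
    by blast
  have r1: "rep r (fill G (Seq X Y (add_mset (e, Seq (add_mset b Xz) Yz Zz) Z0))) E (add_mset (z,b) (add_mset (x, BoxArr a b) K)) {#u#}"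
    using c(4)[of X Y "add_mset b Xz" Yz] c(2,3) by simp
  have io1: "nderiv (io a e)" by (rule BoxL.IH(1)[OF rep_io])
  have io2: "nderiv (io e a)" by (rule BoxL.IH(2)[OF rep_io])
  show ?case using nderiv.boxL[of G X0 a b Y Z0 e Xz Yz Zz, simplified] rep_nested[OF BoxL.prems] rep_nested[OF r1]
      BoxL.IH(3)[OF r1] io1 io2 v(1) X c(1) by simp
next
  case (BoxR F x a E I b)
  have xin: "x \<in> nodes r E I {#(x, BoxArr a b)#}" by (simp add: nodes_def)
  obtain G X Y Z I1 O1 Ic Oc where v: "S = fill G (Seq X Y Z)" "I = image_mset (Pair x) X + (I1 + Ic)"
    "{#(x, BoxArr a b)#} = image_mset (Pair x) Y + (O1 + Oc)"
    "\<And>y a' Xn Yn X' Y'. y \<notin> nodes r E I {#(x, BoxArr a b)#} \<Longrightarrow> rep r (fill G (Seq X' Y' (add_mset (a', Seq Xn Yn {#}) Z))) (add_mset (x,a',y) E)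
        (image_mset (Pair x) X' + image_mset (Pair y) Xn + (I1 + Ic)) (image_mset (Pair x) Y' + image_mset (Pair y) Yn + (O1 + Oc))"
    and vO: "x \<notin> ilabs (O1 + Oc)"
    by (rule node_view[OF BoxR.prems xin]) (rule that; assumption)
  have Y: "Y = {#BoxArr a b#}" "O1 + Oc = {#}" using out_node[OF v(3) vO] by auto
  obtain y where y: "y \<notin> F" "y \<notin> nodes r E I {#(x, BoxArr a b)#}" using fresh_nodes[OF BoxR.hyps(1)] by blast
  have r1: "rep r (fill G (Seq X {#} (add_mset (a, Seq {#} {#b#} {#}) Z))) (add_mset (x,a,y) E) I {#(y,b)#}"
    using v(4)[OF y(2), where a'=a and Xn="{#}" and Yn="{#b#}" and X'=X and Y'="{#}"] v(2) Y by simp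
  have "nderiv (fill G (Seq X {#} (add_mset (a, Seq {#} {#b#} {#}) Z)))" using BoxR.IH y(1) r1 by blast
  then show ?case using nderiv.boxR[of G X "{#}" a b Z, simplified] rep_nested[OF BoxR.prems] rep_nested[OF r1]
      v(1) Y by simp
next
  case (DiaL F x a E b K u)
  have xin: "x \<in> nodes r E (add_mset (x, DiaArr a b) K) {#u#}" by (simp add: nodes_def)
  obtain G X Y Z I1 O1 Ic Oc where v: "S = fill G (Seq X Y Z)" "add_mset (x, DiaArr a b) K = image_mset (Pair x) X + (I1 + Ic)"
    "{#u#} = image_mset (Pair x) Y + (O1 + Oc)" "x \<notin> ilabs (I1 + Ic)"
    "\<And>y a' Xn Yn X' Y'. y \<notin> nodes r E (add_mset (x, DiaArr a b) K) {#u#} \<Longrightarrow> rep r (fill G (Seq X' Y' (add_mset (a', Seq Xn Yn {#}) Z))) (add_mset (x,a',y) E)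
        (image_mset (Pair x) X' + image_mset (Pair y) Xn + (I1 + Ic)) (image_mset (Pair x) Y' + image_mset (Pair y) Yn + (O1 + Oc))"
    by (rule node_view[OF DiaL.prems xin]) (rule that; assumption)
  have "DiaArr a b \<in># X" by (rule mem_node[OF _ v(4)]) (simp add: v(2)[symmetric])
  then obtain X0 where X: "X = add_mset (DiaArr a b) X0" by (metis insert_DiffM)
  have K: "K = image_mset (Pair x) X0 + (I1 + Ic)" using v(2) X by simp
  obtain y where y: "y \<notin> F" "y \<notin> nodes r E (add_mset (x, DiaArr a b) K) {#u#}" using fresh_nodes[OF DiaL.hyps(1)] by blast
  have r1: "rep r (fill G (Seq X0 Y (add_mset (a, Seq {#b#} {#} {#}) Z))) (add_mset (x,a,y) E) (add_mset (y,b) K) {#u#}"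
    using v(5)[OF y(2), where a'=a and Xn="{#b#}" and Yn="{#}" and X'=X0 and Y'=Y] K v(3) by (simp add: ac_simps)
  have "nderiv (fill G (Seq X0 Y (add_mset (a, Seq {#b#} {#} {#}) Z)))" using DiaL.IH y(1) r1 by blast
  then show ?case using nderiv.diaL[of G X0 a b Y Z, simplified] rep_nested[OF DiaL.prems] rep_nested[OF r1]
      v(1) X by simp
next
  case (DiaR x e z E a I b)
  have xin: "x \<in> nodes r E I {#(x, DiaArr a b)#}" by (simp add: nodes_def)
  obtain G X Y Z O1 Oc where v: "S = fill G (Seq X Y Z)"
    "\<And>e z. (x,e,z) \<in># E \<Longrightarrow> \<exists>Z0 Xz Yz Zz Iz Oz. Z = add_mset (e, Seq Xz Yz Zz) Z0
        \<and> I = image_mset (Pair x) X + image_mset (Pair z) Xz + Iz \<and> {#(x, DiaArr a b)#} = image_mset (Pair x) Y + image_mset (Pair z) Yz + Oz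
        \<and> (\<forall>X' Y' Xz' Yz'. rep r (fill G (Seq X' Y' (add_mset (e, Seq Xz' Yz' Zz) Z0))) E
              (image_mset (Pair x) X' + image_mset (Pair z) Xz' + Iz) (image_mset (Pair x) Y' + image_mset (Pair z) Yz' + Oz))"
    and vY: "{#(x, DiaArr a b)#} = image_mset (Pair x) Y + (O1 + Oc)" and vO: "x \<notin> ilabs (O1 + Oc)"
    by (rule node_view[OF DiaR.prems xin]) (rule that; assumption)
  from v(2)[OF DiaR.hyps(1)] obtain Z0 Xz Yz Zz Iz Oz where c: "Z = add_mset (e, Seq Xz Yz Zz) Z0"
    "I = image_mset (Pair x) X + image_mset (Pair z) Xz + Iz" "{#(x, DiaArr a b)#} = image_mset (Pair x) Y + (image_mset (Pair z) Yz + Oz)"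
    "\<And>X' Y' Xz' Yz'. rep r (fill G (Seq X' Y' (add_mset (e, Seq Xz' Yz' Zz) Z0))) E
              (image_mset (Pair x) X' + image_mset (Pair z) Xz' + Iz) (image_mset (Pair x) Y' + image_mset (Pair z) Yz' + Oz)"
    by (auto simp: ac_simps)
  have Y0: "Y = {#DiaArr a b#}" using out_node[OF vY vO] by auto
  have Y: "Y = {#DiaArr a b#}" "image_mset (Pair z) Yz + Oz = {#}" using c(3) Y0 by auto
  have r1: "rep r (fill G (Seq X {#} (add_mset (e, Seq Xz {#b#} Zz) Z0))) E I {#(z,b)#}"
    using c(4)[of X "{#}" Xz "{#b#}"] c(2) Y by simp
  have io1: "nderiv (io a e)" by (rule DiaR.IH(1)[OF rep_io])
  have io2: "nderiv (io e a)" by (rule DiaR.IH(2)[OF rep_io])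
  show ?case using nderiv.diaR[of G X "{#}" a b Z0 e Xz "{#}" Zz, simplified] rep_nested[OF DiaR.prems] rep_nested[OF r1]
      DiaR.IH(3)[OF r1] io1 io2 v(1) Y c(1) by simp
qed

lemma conjs_L: "(\<And>f. f \<in> set xs \<Longrightarrow> (x,f) \<in># I) \<Longrightarrow> L E I (x, conjs xs)"
proof (induction xs rule: conjs.induct)
  case 1 then show ?case by (simp add: top)
next
  case (2 f) then show ?case by (auto intro: ident')
next
  case (3 f g zs)
  have "L E I (x, f)" by (rule ident') (use 3 in auto)
  moreover have "L E I (x, conjs (g # zs))" using 3 by auto
  ultimately show ?case by (simp add: L.AndR)
qed

theorem theorem3:
  fixes A :: "'a fm set" and \<phi> :: "'a fm"
  assumes "finite (insert \<phi> A)"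
    and "derives A \<phi>"
  shows "nderiv (Seq (mset_set A) {#\<phi>#} {#})"
proof -
  have fA: "finite A" using assms(1) by simp
  from assms(2) obtain xs where xs: "set xs \<subseteq> A" "hprov (Imp (conjs xs) \<phi>)" unfolding derives_def by blast
  let ?IA = "image_mset (Pair 0) (mset_set A)"
  have "L {#} {#} (0, Imp (conjs xs) \<phi>)" by (rule hilb[OF xs(2)])
  then have "L {#} ?IA (0, Imp (conjs xs) \<phi>)" using weakI by fastforce
  then have h1: "L {#} (add_mset (0, conjs xs) ?IA) (0, \<phi>)" by (rule impR_inv)
  have h2: "L {#} ?IA (0, conjs xs)"
    by (rule conjs_L) (use xs(1) fA in auto)
  have "L {#} ?IA (0, \<phi>)" by (rule cut[OF h2 h1])
  moreover have "rep 0 (Seq (mset_set A) {#\<phi>#} {#}) {#} ?IA {#(0,\<phi>)#}"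
    using rep.leaf[of 0 "mset_set A" "{#\<phi>#}"] by simp
  ultimately show ?thesis by (rule trans)
qed

end
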